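(* Let $\theta\in(0,\infty)$ and let $\mathbf c^L$ be a feasible consumption plan with $|c^L_t(W^t)|\le C<\infty$ almost surely for all $t$. In the SP-MA minimization problem it suffices to minimize over distortion sequences $(m_t)_t\in\mathbb M$, where $$\mathbb M=\Big\{(m_t)_t: m_t\in\mathcal M\ \text{and}\ \sum_{j=0}^\infty\gamma^j E\Big[\frac{M_{t+j}(W^{t+j})}{M_t(w^t)}\,\mathcal E[m_{t+j+1}(\cdot\mid W^{t+j})](Y_{t+j})\,\Big|\,w^t\Big]\le C_{C,\gamma,\theta}\ \ \forall (t,w^t)\Big\},$$ with $C_{C,\gamma,\theta}=\frac{2C}{(1-\gamma)\theta\gamma}$; that is, restricting the minimization in the SP-MA to $\mathbb M$ does not change its value (a minimizing sequence lies in $\mathbb M$).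
   Context: Let $(Y_t)$ be a Markov chain on a finite set $\mathbb Y\subseteq\mathbb R_+$ with transition matrix $P_{Y'|Y}$, $(X_t)$ i.i.d. with law $P_X$ independent of $(Y_t)$, $W_t=(X_t,Y_t)$, $W^t=(W_0,\dots,W_t)$, $\mathcal W^t$ the $\sigma$-algebra generated by $W^t$, and $P$ the induced law on histories; $E[\cdot\mid w^t]$ is conditional expectation under $P$ given $W^t=w^t$. A feasible consumption plan is a sequence of $\mathcal W^t$-measurable functions $c^L_t$. Let $\gamma\in(0,1)$. $\mathcal M=\{g:\mathbb Y\to\mathbb R_+:\sum_{y'}g(y')P_{Y'|Y}(y'\mid y)=1\ \forall y\}$, and for $g\in\mathcal M$, $\mathcal E[g](y)=\sum_{y'}g(y')\log g(y')\,P_{Y'|Y}(y'\mid y)$. A distortion sequence is $(m_{t+1})_t$ with $m_{t+1}(\cdot\mid w^t)\in\mathcal M$; $M_0=1$, $M_t=\prod_{\tau=1}^t m_\tau$. The SP-MA minimization problem at $(t,w^t)$ is $$\min_{(m_{t+j+1})_j}\sum_{j=0}^\infty\gamma^j E\Big[\frac{M_{t+j}(W^{t+j})}{M_t(w^t)}\big\{c^L_{t+j}(W^{t+j})+\theta\gamma\,\mathcal E[m_{t+j+1}(\cdot\mid W^{t+j})](Y_{t+j})\big\}\,\Big|\,w^t\Big],$$ and its minimum is assumed to be attained. *)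

theory Defs
  imports "HOL-Probability.Probability"
begin

text \<open>Histories w^t = (W_0,...,W_t) are lists of pairs (x,y) of length t+1.
  Parameters: Y (finite state set of the chain), P (P y y' = P_{Y'|Y}(y'|y)),
  MX (law P_X of the X_t on a measurable space).\<close>

definition hist :: "real set \<Rightarrow> 'x measure \<Rightarrow> nat \<Rightarrow> ('x \<times> real) list set" where
  "hist Y MX n = {h. length h = n \<and> (\<forall>w\<in>set h. fst w \<in> space MX \<and> snd w \<in> Y)}"

definition inM :: "real set \<Rightarrow> (real \<Rightarrow> real \<Rightarrow> real) \<Rightarrow> (real \<Rightarrow> real) \<Rightarrow> bool" where
  "inM Y P g \<longleftrightarrow> (\<forall>y'\<in>Y. 0 \<le> g y') \<and> (\<forall>y\<in>Y. (\<Sum>y'\<in>Y. g y' * P y y') = 1)"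

definition Ent :: "real set \<Rightarrow> (real \<Rightarrow> real \<Rightarrow> real) \<Rightarrow> (real \<Rightarrow> real) \<Rightarrow> real \<Rightarrow> real" where
  "Ent Y P g y = (\<Sum>y'\<in>Y. g y' * ln (g y') * P y y')"

text \<open>One-step conditional expectation under P of a nonnegative function of W^{n+1},
  given W^n = h: X_{n+1} ~ P_X independent, Y_{n+1} ~ P(.|y_n).\<close>
definition Enext :: "real set \<Rightarrow> (real \<Rightarrow> real \<Rightarrow> real) \<Rightarrow> 'x measure
    \<Rightarrow> (('x \<times> real) list \<Rightarrow> ennreal) \<Rightarrow> ('x \<times> real) list \<Rightarrow> ennreal" where
  "Enext Y P MX F h =
     (\<integral>\<^sup>+ x. (\<Sum>y'\<in>Y. ennreal (P (snd (last h)) y') * F (h @ [(x, y')])) \<partial>MX)"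

text \<open>E[F(W^{t+j}) | W^t = h] for nonnegative F.\<close>
definition Ecnd :: "real set \<Rightarrow> (real \<Rightarrow> real \<Rightarrow> real) \<Rightarrow> 'x measure \<Rightarrow> nat
    \<Rightarrow> (('x \<times> real) list \<Rightarrow> ennreal) \<Rightarrow> ('x \<times> real) list \<Rightarrow> ennreal" where
  "Ecnd Y P MX j F = (Enext Y P MX ^^ j) F"

definition cE :: "real set \<Rightarrow> (real \<Rightarrow> real \<Rightarrow> real) \<Rightarrow> 'x measure \<Rightarrow> nat
    \<Rightarrow> (('x \<times> real) list \<Rightarrow> real) \<Rightarrow> ('x \<times> real) list \<Rightarrow> ereal" where
  "cE Y P MX j F h =
     enn2ereal (Ecnd Y P MX j (\<lambda>h'. ennreal (F h')) h)
     - enn2ereal (Ecnd Y P MX j (\<lambda>h'. ennreal (- F h')) h)"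

text \<open>Distortion sequences: m (Suc t) h y' = m_{t+1}(y' | w^t) with h = w^t (length t+1);
  m 0 is unused.  M_{t+j}/M_t along a history h' of length t+j+1.\<close>
definition relM :: "(nat \<Rightarrow> ('x \<times> real) list \<Rightarrow> real \<Rightarrow> real) \<Rightarrow> nat \<Rightarrow> nat
    \<Rightarrow> ('x \<times> real) list \<Rightarrow> real" where
  "relM m t j h' = (\<Prod>\<tau>\<in>{Suc t..t+j}. m \<tau> (take \<tau> h') (snd (h' ! \<tau>)))"

text \<open>The \<sigma>-algebra of W^{n-1} = (W_0,..,W_{n-1}) on histories of length n:
  f is W^{n-1}-measurable iff this composite is measurable.\<close>
definition hist_measurable :: "real set \<Rightarrow> 'x measure \<Rightarrow> nat \<Rightarrow> (('x \<times> real) list \<Rightarrow> real) \<Rightarrow> bool" where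
  "hist_measurable Y MX n f \<longleftrightarrow>
     (\<lambda>w. f (map w [0..<n])) \<in> borel_measurable (PiM {..<n} (\<lambda>_. MX \<Otimes>\<^sub>M count_space Y))"

definition Dist :: "real set \<Rightarrow> (real \<Rightarrow> real \<Rightarrow> real) \<Rightarrow> 'x measure
    \<Rightarrow> (nat \<Rightarrow> ('x \<times> real) list \<Rightarrow> real \<Rightarrow> real) set" where
  "Dist Y P MX = {m. \<forall>t. (\<forall>h\<in>hist Y MX (Suc t). inM Y P (m (Suc t) h))
      \<and> (\<forall>y'\<in>Y. hist_measurable Y MX (Suc t) (\<lambda>h. m (Suc t) h y'))}"

definition DS :: "real set \<Rightarrow> (real \<Rightarrow> real \<Rightarrow> real) \<Rightarrow> 'x measure \<Rightarrow> real
    \<Rightarrow> (nat \<Rightarrow> ('x \<times> real) list \<Rightarrow> real) \<Rightarrow> ('x \<times> real) list \<Rightarrow> ereal" where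
  "DS Y P MX \<gamma> g h = (\<Sum>j. ereal (\<gamma> ^ j) * cE Y P MX j (g j) h)"

definition SPMA :: "real set \<Rightarrow> (real \<Rightarrow> real \<Rightarrow> real) \<Rightarrow> 'x measure \<Rightarrow> real \<Rightarrow> real
    \<Rightarrow> (nat \<Rightarrow> ('x \<times> real) list \<Rightarrow> real) \<Rightarrow> nat
    \<Rightarrow> (nat \<Rightarrow> ('x \<times> real) list \<Rightarrow> real \<Rightarrow> real) \<Rightarrow> ('x \<times> real) list \<Rightarrow> ereal" where
  "SPMA Y P MX \<gamma> \<theta> c t m h = DS Y P MX \<gamma>
     (\<lambda>j h'. relM m t j h' * (c (t+j) h' + \<theta> * \<gamma> * Ent Y P (m (Suc (t+j)) h') (snd (last h')))) h"

definition MM :: "real set \<Rightarrow> (real \<Rightarrow> real \<Rightarrow> real) \<Rightarrow> 'x measure \<Rightarrow> real \<Rightarrow> real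
    \<Rightarrow> (nat \<Rightarrow> ('x \<times> real) list \<Rightarrow> real \<Rightarrow> real) set" where
  "MM Y P MX \<gamma> K = {m \<in> Dist Y P MX. \<forall>t. \<forall>h\<in>hist Y MX (Suc t).
      DS Y P MX \<gamma> (\<lambda>j h'. relM m t j h' * Ent Y P (m (Suc (t+j)) h') (snd (last h'))) h \<le> ereal K}"

end

theory Submission
  imports Defs
begin

locale ctx =
  fixes Y :: "real set" and P :: "real \<Rightarrow> real \<Rightarrow> real" and MX :: "'x measure"
  assumes finY: "finite Y" and neY: "Y \<noteq> {}"
    and Pnn: "\<And>y y'. y \<in> Y \<Longrightarrow> y' \<in> Y \<Longrightarrow> 0 \<le> P y y'"
    and Psum: "\<And>y. y \<in> Y \<Longrightarrow> (\<Sum>y'\<in>Y. P y y') = 1"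
    and MXp: "prob_space MX"
begin

abbreviation "H \<equiv> hist Y MX"
abbreviation "Nx \<equiv> Enext Y P MX"
abbreviation "E \<equiv> Ecnd Y P MX"

lemma H_iff: "h \<in> H n \<longleftrightarrow> length h = n \<and> (\<forall>w\<in>set h. fst w \<in> space MX \<and> snd w \<in> Y)"
  by (simp add: hist_def)

lemma H_snoc: "h \<in> H n \<Longrightarrow> x \<in> space MX \<Longrightarrow> y \<in> Y \<Longrightarrow> h @ [(x,y)] \<in> H (Suc n)"
  by (auto simp: H_iff)

lemma H_take: "h \<in> H n \<Longrightarrow> k \<le> n \<Longrightarrow> take k h \<in> H k"
  by (auto simp: H_iff dest: in_set_takeD)

lemma H_last: "h \<in> H (Suc n) \<Longrightarrow> snd (last h) \<in> Y"
  by (auto simp: H_iff) (metis last_in_set list.size(3) nat.distinct(1))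

lemma H_nth: "h \<in> H n \<Longrightarrow> i < n \<Longrightarrow> snd (h ! i) \<in> Y \<and> fst (h ! i) \<in> space MX"
  by (auto simp: H_iff)

lemma E_Suc: "E (Suc j) F h = Nx (E j F) h"
  by (simp add: Ecnd_def)

lemma E_0: "E 0 F h = F h"
  by (simp add: Ecnd_def)

lemma Nx_def': "Nx F h = (\<integral>\<^sup>+ x. (\<Sum>y'\<in>Y. ennreal (P (snd (last h)) y') * F (h @ [(x, y')])) \<partial>MX)"
  by (simp add: Enext_def)

lemma Nx_mono:
  assumes "h \<in> H n" "\<And>x y. x \<in> space MX \<Longrightarrow> y \<in> Y \<Longrightarrow> F (h @ [(x,y)]) \<le> G (h @ [(x,y)])"
  shows "Nx F h \<le> Nx G h"
  unfolding Nx_def' using assms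
  by (intro nn_integral_mono sum_mono mult_left_mono) auto

lemma E_mono:
  assumes "h \<in> H n" "\<And>h'. h' \<in> H (n + j) \<Longrightarrow> take n h' = h \<Longrightarrow> F h' \<le> G h'"
  shows "E j F h \<le> E j G h"
  using assms
proof (induction j arbitrary: n h)
  case 0
  then show ?case by (simp add: E_0 H_iff)
next
  case (Suc j)
  show ?case unfolding E_Suc
  proof (rule Nx_mono[OF Suc.prems(1)])
    fix x y assume xy: "x \<in> space MX" "y \<in> Y"
    show "E j F (h @ [(x, y)]) \<le> E j G (h @ [(x, y)])"
    proof (rule Suc.IH[where n="Suc n"])
      show "h @ [(x, y)] \<in> H (Suc n)" using H_snoc Suc.prems(1) xy by blast
      fix h' assume "h' \<in> H (Suc n + j)" "take (Suc n) h' = h @ [(x, y)]"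
      moreover have "take n h' = h"
        using calculation Suc.prems(1) by (metis H_iff butlast_snoc butlast_take diff_Suc_1 le_add1 plus_1_eq_Suc add.commute length_append_singleton)
      ultimately show "F h' \<le> G h'" using Suc.prems(2) by simp
    qed
  qed
qed

lemma E_cong:
  assumes "h \<in> H n" "\<And>h'. h' \<in> H (n + j) \<Longrightarrow> take n h' = h \<Longrightarrow> F h' = G h'"
  shows "E j F h = E j G h"
  using E_mono[OF assms(1), of j F G] E_mono[OF assms(1), of j G F] assms(2) by (simp add: antisym)

lemma Nx_const:
  assumes "h \<in> H (Suc n)"
  shows "Nx (\<lambda>_. a) h = a"
proof -
  interpret prob_space MX by (rule MXp)
  have y: "snd (last h) \<in> Y" using H_last assms by blast
  have "(\<Sum>y'\<in>Y. ennreal (P (snd (last h)) y') * a) = (\<Sum>y'\<in>Y. ennreal (P (snd (last h)) y')) * a"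
    by (simp add: sum_distrib_right)
  also have "(\<Sum>y'\<in>Y. ennreal (P (snd (last h)) y')) = ennreal (\<Sum>y'\<in>Y. P (snd (last h)) y')"
    using Pnn y by (simp add: sum_ennreal)
  also have "\<dots> = 1" using Psum y by simp
  finally show ?thesis unfolding Nx_def' by (simp add: emeasure_space_1)
qed

lemma E_const:
  assumes "h \<in> H (Suc n)"
  shows "E j (\<lambda>_. a) h = a"
  using assms
proof (induction j arbitrary: n h)
  case 0 then show ?case by (simp add: E_0)
next
  case (Suc j)
  have "E (Suc j) (\<lambda>_. a) h = Nx (\<lambda>_. a) h"
    unfolding E_Suc
  proof (rule antisym)
    show "Nx (E j (\<lambda>_. a)) h \<le> Nx (\<lambda>_. a) h"
      by (rule Nx_mono[OF Suc.prems]) (use Suc.IH[OF H_snoc[OF Suc.prems]] in auto)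
    show "Nx (\<lambda>_. a) h \<le> Nx (E j (\<lambda>_. a)) h"
      by (rule Nx_mono[OF Suc.prems]) (use Suc.IH[OF H_snoc[OF Suc.prems]] in auto)
  qed
  also have "\<dots> = a" using Nx_const Suc.prems by blast
  finally show ?case .
qed

definition "S = MX \<Otimes>\<^sub>M count_space Y"
definition "PI n = PiM {..<n} (\<lambda>_. S)"
definition hm :: "nat \<Rightarrow> (('x \<times> real) list \<Rightarrow> 'b::topological_space) \<Rightarrow> bool" where
  "hm n F \<longleftrightarrow> (\<lambda>w. F (map w [0..<n])) \<in> borel_measurable (PI n)"

lemma space_S: "space S = space MX \<times> Y"
  by (simp add: S_def space_pair_measure)

lemma map_upt_snoc:
  assumes "length h = n"
  shows "map (\<lambda>i. if i < n then h ! i else if i = n then z else u i) [0..<Suc n] = h @ [z]"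
  using assms by (intro nth_equalityI) (auto simp: nth_append)

lemma map_upt_snoc':
  shows "map (\<lambda>i. if i < n then w i else if i = n then z else u i) [0..<Suc n] = map w [0..<n] @ [z]"
  by (intro nth_equalityI) (auto simp: nth_append)

lemma map_upt_prefix:
  assumes "length h = n"
  shows "map (\<lambda>i. if i < n then h ! i else g i) [0..<n] = h"
  using assms by (intro nth_equalityI) auto

lemma meas_snoc_sec:
  assumes h: "h \<in> H n" and y: "y \<in> Y"
  shows "(\<lambda>x i. if i < n then h ! i else if i = n then (x, y) else undefined) \<in> measurable MX (PI (Suc n))"
  unfolding PI_def
proof (rule measurable_PiM_single')
  fix i assume "i \<in> {..<Suc n}"
  show "(\<lambda>x. if i < n then h ! i else if i = n then (x, y) else undefined) \<in> measurable MX S"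
  proof (cases "i < n")
    case True
    then have "h ! i \<in> space S" using H_nth[OF h True] by (simp add: space_S mem_Times_iff)
    then show ?thesis using True by simp
  next
    case False
    then show ?thesis using \<open>i \<in> {..<Suc n}\<close> y unfolding S_def by simp
  qed
next
  show "(\<lambda>x i. if i < n then h ! i else if i = n then (x, y) else undefined) \<in> space MX \<rightarrow> (\<Pi>\<^sub>E i\<in>{..<Suc n}. space S)"
    using h y by (auto simp: space_S H_iff PiE_def extensional_def mem_Times_iff)
qed

lemma hm_section:
  assumes h: "h \<in> H n" and y: "y \<in> Y" and F: "hm (Suc n) F"
  shows "(\<lambda>x. F (h @ [(x, y)])) \<in> borel_measurable MX"
proof -
  have len: "length h = n" using h by (simp add: H_iff)
  have eq: "map (\<lambda>i. if i < n then h ! i else if i = n then (x, y) else undefined) [0..<Suc n] = h @ [(x, y)]" for x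
    by (rule map_upt_snoc[OF len])
  show ?thesis
    using measurable_comp[OF meas_snoc_sec[OF h y] F[unfolded hm_def]] unfolding comp_def eq .
qed

lemma meas_snoc_pair:
  assumes y: "y \<in> Y"
  shows "(\<lambda>(w, x) i. if i < n then w i else if i = n then (x, y) else undefined) \<in> measurable (PI n \<Otimes>\<^sub>M MX) (PI (Suc n))"
proof -
  have "(\<lambda>p i. (\<lambda>i p. if i < n then fst p i else if i = n then (snd p, y) else undefined) i p) \<in> measurable (PI n \<Otimes>\<^sub>M MX) (PI (Suc n))"
    unfolding PI_def
  proof (rule measurable_PiM_single')
    fix i assume "i \<in> {..<Suc n}"
    show "(\<lambda>p. if i < n then fst p i else if i = n then (snd p, y) else undefined) \<in> measurable (Pi\<^sub>M {..<n} (\<lambda>_. S) \<Otimes>\<^sub>M MX) S"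
    proof (cases "i < n")
      case True
      then show ?thesis by simp
    next
      case False
      then show ?thesis using \<open>i \<in> {..<Suc n}\<close> y unfolding S_def by simp
    qed
  next
    show "(\<lambda>p i. if i < n then fst p i else if i = n then (snd p, y) else undefined) \<in> space (Pi\<^sub>M {..<n} (\<lambda>_. S) \<Otimes>\<^sub>M MX) \<rightarrow> (\<Pi>\<^sub>E i\<in>{..<Suc n}. space S)"
      using y by (auto simp: space_pair_measure space_S PiE_def extensional_def Pi_def PI_def space_PiM)
  qed
  then show ?thesis by (simp add: case_prod_beta')
qed

lemma hm_Nx:
  assumes F: "hm (Suc n) F" and n: "1 \<le> n"
  shows "hm n (Nx F)"
proof -
  interpret prob_space MX by (rule MXp)
  obtain k where k: "n = Suc k" using n by (cases n) auto
  have lastw: "snd (last (map w [0..<n])) = snd (w k)" for w :: "nat \<Rightarrow> 'x \<times> real"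
    using k by simp
  have Pm: "(\<lambda>w. ennreal (P (snd (w k)) y')) \<in> borel_measurable (PI n)" for y'
  proof -
    have wk: "(\<lambda>w. w k) \<in> measurable (PI n) (MX \<Otimes>\<^sub>M count_space Y)"
      unfolding PI_def S_def[symmetric] using k by simp
    have s: "(\<lambda>w. snd (w k)) \<in> measurable (PI n) (count_space Y)"
      using measurable_compose[OF wk measurable_snd] .
    have c: "(\<lambda>y. ennreal (P y y')) \<in> measurable (count_space Y) borel" by (rule measurable_count_space_eq1[THEN iffD2]) simp
    show ?thesis using measurable_compose[OF s c] .
  qed
  have Fm: "(\<lambda>p. F (map (fst p) [0..<n] @ [(snd p, y')])) \<in> borel_measurable (PI n \<Otimes>\<^sub>M MX)" if "y' \<in> Y" for y'
  proof -
    have eq: "map ((\<lambda>(w, x) i. if i < n then w i else if i = n then (x, y') else undefined) p) [0..<Suc n] = map (fst p) [0..<n] @ [(snd p, y')]" for p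
      by (cases p) (simp only: case_prod_conv map_upt_snoc' fst_conv snd_conv)
    have "(\<lambda>p. (\<lambda>w. F (map w [0..<Suc n])) ((\<lambda>(w, x) i. if i < n then w i else if i = n then (x, y') else undefined) p)) \<in> borel_measurable (PI n \<Otimes>\<^sub>M MX)"
      using measurable_compose[OF meas_snoc_pair[OF that, of n] F[unfolded hm_def]] .
    then show ?thesis by (simp only: eq)
  qed
  have "(\<lambda>p. \<Sum>y'\<in>Y. ennreal (P (snd (fst p k)) y') * F (map (fst p) [0..<n] @ [(snd p, y')])) \<in> borel_measurable (PI n \<Otimes>\<^sub>M MX)"
  proof (intro borel_measurable_sum borel_measurable_times_ennreal)
    fix y' assume "y' \<in> Y"
    show "(\<lambda>p. ennreal (P (snd (fst p k)) y')) \<in> borel_measurable (PI n \<Otimes>\<^sub>M MX)"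
      by (rule measurable_compose[OF measurable_fst Pm[of y']])
    show "(\<lambda>p. F (map (fst p) [0..<n] @ [(snd p, y')])) \<in> borel_measurable (PI n \<Otimes>\<^sub>M MX)"
      using Fm[OF \<open>y' \<in> Y\<close>] .
  qed
  then have "case_prod (\<lambda>w x. \<Sum>y'\<in>Y. ennreal (P (snd (w k)) y') * F (map w [0..<n] @ [(x, y')])) \<in> borel_measurable (PI n \<Otimes>\<^sub>M MX)"
    by (simp add: case_prod_beta')
  from borel_measurable_nn_integral[OF this]
  show ?thesis unfolding hm_def Nx_def' lastw .
qed

lemma hm_E:
  assumes "hm (n + j) F" "1 \<le> n"
  shows "hm n (E j F)"
  using assms
proof (induction j arbitrary: n)
  case 0 then show ?case by (simp add: E_0[abs_def])
next
  case (Suc j)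
  have "hm (Suc n) (E j F)" using Suc.IH[of "Suc n"] Suc.prems by simp
  then have "hm n (Nx (E j F))" using hm_Nx Suc.prems(2) by blast
  then show ?case by (simp add: E_Suc[abs_def])
qed

lemma Nx_cong:
  assumes "h \<in> H n" "\<And>x y. x \<in> space MX \<Longrightarrow> y \<in> Y \<Longrightarrow> F (h @ [(x,y)]) = G (h @ [(x,y)])"
  shows "Nx F h = Nx G h"
  using Nx_mono[OF assms(1), of F G] Nx_mono[OF assms(1), of G F] assms(2) by (simp add: antisym)

lemma Nx_integrand_meas:
  assumes h: "h \<in> H n" and F: "hm (Suc n) F"
  shows "(\<lambda>x. \<Sum>y'\<in>Y. ennreal (P (snd (last h)) y') * F (h @ [(x, y')])) \<in> borel_measurable MX"
  using hm_section[OF h _ F] by (intro borel_measurable_sum borel_measurable_times_ennreal) auto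

lemma Nx_add:
  assumes h: "h \<in> H n" and F: "hm (Suc n) F" and G: "hm (Suc n) G"
  shows "Nx (\<lambda>r. F r + G r) h = Nx F h + Nx G h"
proof -
  have "Nx (\<lambda>r. F r + G r) h = (\<integral>\<^sup>+ x. (\<Sum>y'\<in>Y. ennreal (P (snd (last h)) y') * F (h @ [(x, y')])) + (\<Sum>y'\<in>Y. ennreal (P (snd (last h)) y') * G (h @ [(x, y')])) \<partial>MX)"
    unfolding Nx_def' by (simp only: distrib_left sum.distrib)
  also have "\<dots> = Nx F h + Nx G h"
    unfolding Nx_def' by (rule nn_integral_add[OF Nx_integrand_meas[OF h F] Nx_integrand_meas[OF h G]])
  finally show ?thesis .
qed

lemma Nx_cmult:
  assumes h: "h \<in> H n" and F: "hm (Suc n) F"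
  shows "Nx (\<lambda>r. c * F r) h = c * Nx F h"
proof -
  have "Nx (\<lambda>r. c * F r) h = (\<integral>\<^sup>+ x. c * (\<Sum>y'\<in>Y. ennreal (P (snd (last h)) y') * F (h @ [(x, y')])) \<partial>MX)"
    unfolding Nx_def' by (simp only: sum_distrib_left mult.left_commute)
  also have "\<dots> = c * Nx F h"
    unfolding Nx_def' by (rule nn_integral_cmult[OF Nx_integrand_meas[OF h F]])
  finally show ?thesis .
qed

lemma Nx_suminf:
  assumes h: "h \<in> H n" and F: "\<And>i. hm (Suc n) (F i)"
  shows "Nx (\<lambda>r. \<Sum>i. F i r) h = (\<Sum>i. Nx (F i) h)"
proof -
  have eq: "(\<Sum>y'\<in>Y. ennreal (P (snd (last h)) y') * (\<Sum>i. F i (h @ [(x, y')])))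
      = (\<Sum>i. \<Sum>y'\<in>Y. ennreal (P (snd (last h)) y') * F i (h @ [(x, y')]))" for x
  proof -
    have "(\<Sum>y'\<in>Y. ennreal (P (snd (last h)) y') * (\<Sum>i. F i (h @ [(x, y')])))
        = (\<Sum>y'\<in>Y. \<Sum>i. ennreal (P (snd (last h)) y') * F i (h @ [(x, y')]))"
      by (simp only: ennreal_suminf_cmult)
    also have "\<dots> = (\<Sum>i. \<Sum>y'\<in>Y. ennreal (P (snd (last h)) y') * F i (h @ [(x, y')]))"
      by (rule suminf_sum[symmetric]) (rule summableI)
    finally show ?thesis .
  qed
  have "Nx (\<lambda>r. \<Sum>i. F i r) h = (\<integral>\<^sup>+ x. (\<Sum>i. \<Sum>y'\<in>Y. ennreal (P (snd (last h)) y') * F i (h @ [(x, y')])) \<partial>MX)"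
    unfolding Nx_def' by (simp only: eq)
  also have "\<dots> = (\<Sum>i. Nx (F i) h)"
    unfolding Nx_def' by (rule nn_integral_suminf) (rule Nx_integrand_meas[OF h F])
  finally show ?thesis .
qed

lemma E_add:
  assumes "h \<in> H n" "1 \<le> n" "hm (n + j) F" "hm (n + j) G"
  shows "E j (\<lambda>r. F r + G r) h = E j F h + E j G h"
  using assms
proof (induction j arbitrary: n h)
  case 0 then show ?case by (simp add: E_0)
next
  case (Suc j)
  have F': "hm (Suc n + j) F" and G': "hm (Suc n + j) G" using Suc.prems by (simp_all add: add_Suc_shift)
  have "E (Suc j) (\<lambda>r. F r + G r) h = Nx (\<lambda>r. E j F r + E j G r) h"
    unfolding E_Suc
  proof (rule Nx_cong[OF Suc.prems(1)])
    fix x y assume xy: "x \<in> space MX" "y \<in> Y"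
    show "E j (\<lambda>r. F r + G r) (h @ [(x, y)]) = E j F (h @ [(x, y)]) + E j G (h @ [(x, y)])"
      by (rule Suc.IH[OF H_snoc[OF Suc.prems(1) xy] _ F' G']) simp
  qed
  also have "\<dots> = Nx (E j F) h + Nx (E j G) h"
    by (rule Nx_add[OF Suc.prems(1) hm_E[OF F'] hm_E[OF G']]) simp_all
  finally show ?case by (simp add: E_Suc)
qed

lemma E_cmult:
  assumes "h \<in> H n" "1 \<le> n" "hm (n + j) F"
  shows "E j (\<lambda>r. c * F r) h = c * E j F h"
  using assms
proof (induction j arbitrary: n h)
  case 0 then show ?case by (simp add: E_0)
next
  case (Suc j)
  have F': "hm (Suc n + j) F" using Suc.prems by (simp_all add: add_Suc_shift)
  have "E (Suc j) (\<lambda>r. c * F r) h = Nx (\<lambda>r. c * E j F r) h"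
    unfolding E_Suc
  proof (rule Nx_cong[OF Suc.prems(1)])
    fix x y assume xy: "x \<in> space MX" "y \<in> Y"
    show "E j (\<lambda>r. c * F r) (h @ [(x, y)]) = c * E j F (h @ [(x, y)])"
      by (rule Suc.IH[OF H_snoc[OF Suc.prems(1) xy] _ F']) simp
  qed
  also have "\<dots> = c * Nx (E j F) h"
    by (rule Nx_cmult[OF Suc.prems(1) hm_E[OF F']]) simp
  finally show ?case by (simp add: E_Suc)
qed

lemma E_suminf:
  assumes "h \<in> H n" "1 \<le> n" "\<And>i. hm (n + j) (F i)"
  shows "E j (\<lambda>r. \<Sum>i. F i r) h = (\<Sum>i. E j (F i) h)"
  using assms
proof (induction j arbitrary: n h)
  case 0 then show ?case by (simp add: E_0)
next
  case (Suc j)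
  have F': "hm (Suc n + j) (F i)" for i using Suc.prems(3)[of i] by (simp_all add: add_Suc_shift)
  have "E (Suc j) (\<lambda>r. \<Sum>i. F i r) h = Nx (\<lambda>r. \<Sum>i. E j (F i) r) h"
    unfolding E_Suc
  proof (rule Nx_cong[OF Suc.prems(1)])
    fix x y assume xy: "x \<in> space MX" "y \<in> Y"
    show "E j (\<lambda>r. \<Sum>i. F i r) (h @ [(x, y)]) = (\<Sum>i. E j (F i) (h @ [(x, y)]))"
      by (rule Suc.IH[OF H_snoc[OF Suc.prems(1) xy] _ F']) simp
  qed
  also have "\<dots> = (\<Sum>i. Nx (E j (F i)) h)"
    by (rule Nx_suminf[OF Suc.prems(1) hm_E[OF F']]) simp
  finally show ?case by (simp add: E_Suc)
qed

lemma E_pull: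
  assumes "h' \<in> H L'" "L \<le> L'" "take L h' = h" "1 \<le> L" "hm (L' + j) G"
  shows "E j (\<lambda>r. a (take L r) * G r) h' = a h * E j G h'"
  using assms
proof (induction j arbitrary: L' h')
  case 0 then show ?case by (simp add: E_0)
next
  case (Suc j)
  have len: "length h' = L'" using Suc.prems(1) by (simp add: H_iff)
  have G': "hm (Suc L' + j) G" using Suc.prems(5) by (simp add: add_Suc_shift)
  have "E (Suc j) (\<lambda>r. a (take L r) * G r) h' = Nx (\<lambda>r. a h * E j G r) h'"
    unfolding E_Suc
  proof (rule Nx_cong[OF Suc.prems(1)])
    fix x y assume xy: "x \<in> space MX" "y \<in> Y"
    have tk: "take L (h' @ [(x, y)]) = h" using Suc.prems(2,3) len by simp
    show "E j (\<lambda>r. a (take L r) * G r) (h' @ [(x, y)]) = a h * E j G (h' @ [(x, y)])"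
      by (rule Suc.IH[OF H_snoc[OF Suc.prems(1) xy] _ tk Suc.prems(4) G']) (use Suc.prems(2) in simp)
  qed
  also have "\<dots> = a h * Nx (E j G) h'"
    by (rule Nx_cmult[OF Suc.prems(1) hm_E[OF G']]) (use Suc.prems(2,4) in simp)
  finally show ?case by (simp add: E_Suc)
qed

lemma hm_take:
  assumes "k \<le> n" "hm k G"
  shows "hm n (\<lambda>h. G (take k h))"
proof -
  have r: "(\<lambda>w. restrict w {..<k}) \<in> measurable (PI n) (PI k)"
    unfolding PI_def by (rule measurable_restrict_subset) (use assms(1) in auto)
  have eq: "map (restrict w {..<k}) [0..<k] = take k (map w [0..<n])" for w :: "nat \<Rightarrow> 'x \<times> real"
    using assms(1) by (intro nth_equalityI) auto
  show ?thesis
    using measurable_compose[OF r assms(2)[unfolded hm_def]] unfolding hm_def eq .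
qed

lemma hm_compY:
  assumes "i < n" "\<And>y. y \<in> Y \<Longrightarrow> hm n (G y)"
  shows "hm n (\<lambda>h. G (snd (h ! i)) h)"
proof -
  have wi: "(\<lambda>w. w i) \<in> measurable (PI n) (MX \<Otimes>\<^sub>M count_space Y)"
    unfolding PI_def S_def[symmetric] using assms(1) by simp
  have g: "(\<lambda>w. snd (w i)) \<in> measurable (PI n) (count_space Y)"
    using measurable_compose[OF wi measurable_snd] .
  have "(\<lambda>w. (\<lambda>y w. G y (map w [0..<n])) (snd (w i)) w) \<in> borel_measurable (PI n)"
    by (rule measurable_compose_countable'[OF _ g]) (use assms(2) finY in \<open>auto simp: hm_def intro: countable_finite\<close>)
  then show ?thesis unfolding hm_def using assms(1) by simp
qed

lemma hm_const: "hm n (\<lambda>_. c)"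
  by (simp add: hm_def)

lemma hm_add: "hm n f \<Longrightarrow> hm n g \<Longrightarrow> hm n (\<lambda>h. f h + (g h :: real))"
  unfolding hm_def by (rule borel_measurable_add)

lemma hm_mult: "hm n f \<Longrightarrow> hm n g \<Longrightarrow> hm n (\<lambda>h. f h * (g h :: real))"
  unfolding hm_def by (rule borel_measurable_times)

lemma hm_mult_enn: "hm n f \<Longrightarrow> hm n g \<Longrightarrow> hm n (\<lambda>h. f h * (g h :: ennreal))"
  unfolding hm_def by (rule borel_measurable_times_ennreal)

lemma hm_ennreal: "hm n f \<Longrightarrow> hm n (\<lambda>h. ennreal (f h))"
  unfolding hm_def by simp

lemma hm_sum: "(\<And>i. i \<in> I \<Longrightarrow> hm n (f i)) \<Longrightarrow> hm n (\<lambda>h. \<Sum>i\<in>I. (f i h :: real))"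
  unfolding hm_def by (rule borel_measurable_sum)

lemma hm_prod: "(\<And>i. i \<in> I \<Longrightarrow> hm n (f i)) \<Longrightarrow> hm n (\<lambda>h. \<Prod>i\<in>I. (f i h :: real))"
  unfolding hm_def by (rule borel_measurable_prod)

lemma hm_ln: "hm n f \<Longrightarrow> hm n (\<lambda>h. ln (f h :: real))"
  unfolding hm_def by (rule borel_measurable_ln)

lemma hm_suminf_enn: "(\<And>i. hm n (f i)) \<Longrightarrow> hm n (\<lambda>h. \<Sum>i. (f i h :: ennreal))"
  unfolding hm_def by (rule borel_measurable_suminf_order)

lemma hist_measurable_hm: "hist_measurable Y MX n f \<longleftrightarrow> hm n f"
  by (simp add: hist_measurable_def hm_def PI_def S_def)

lemma hm_last:
  assumes "\<And>y. y \<in> Y \<Longrightarrow> hm (Suc k) (G y)"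
  shows "hm (Suc k) (\<lambda>h. G (snd (last h)) h)"
proof -
  have "hm (Suc k) (\<lambda>h. G (snd (h ! k)) h)" by (rule hm_compY) (use assms in auto)
  moreover have "(\<lambda>w. G (snd (last (map w [0..<Suc k]))) (map w [0..<Suc k])) = (\<lambda>w. G (snd (map w [0..<Suc k] ! k)) (map w [0..<Suc k]))"
    by (simp add: nth_append)
  ultimately show ?thesis unfolding hm_def by simp
qed

lemma Dist_nn: "m \<in> Dist Y P MX \<Longrightarrow> 1 \<le> \<tau> \<Longrightarrow> g \<in> H \<tau> \<Longrightarrow> y \<in> Y \<Longrightarrow> 0 \<le> m \<tau> g y"
  by (cases \<tau>) (auto simp: Dist_def inM_def)

lemma Dist_sum: "m \<in> Dist Y P MX \<Longrightarrow> 1 \<le> \<tau> \<Longrightarrow> g \<in> H \<tau> \<Longrightarrow> y \<in> Y \<Longrightarrow> (\<Sum>y'\<in>Y. m \<tau> g y' * P y y') = 1"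
  by (cases \<tau>) (auto simp: Dist_def inM_def)

lemma Dist_hm: "m \<in> Dist Y P MX \<Longrightarrow> 1 \<le> \<tau> \<Longrightarrow> y \<in> Y \<Longrightarrow> hm \<tau> (\<lambda>g. m \<tau> g y)"
  by (cases \<tau>) (auto simp: Dist_def hist_measurable_hm)

lemma relM_0[simp]: "relM m n 0 h = 1"
  by (simp add: relM_def)

lemma relM_1: "relM m n 1 h = m (Suc n) (take (Suc n) h) (snd (h ! Suc n))"
  by (simp add: relM_def)

lemma relM_nn:
  assumes m: "m \<in> Dist Y P MX" and h: "h \<in> H (Suc n + j)"
  shows "0 \<le> relM m n j h"
  unfolding relM_def
proof (rule prod_nonneg)
  fix \<tau> assume \<tau>: "\<tau> \<in> {Suc n..n + j}"
  show "0 \<le> m \<tau> (take \<tau> h) (snd (h ! \<tau>))"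
    by (rule Dist_nn[OF m]) (use \<tau> H_take[OF h, of \<tau>] H_nth[OF h, of \<tau>] in auto)
qed

lemma relM_hm:
  assumes m: "m \<in> Dist Y P MX"
  shows "hm (Suc n + j) (relM m n j)"
  unfolding relM_def
proof (rule hm_prod)
  fix \<tau> assume \<tau>: "\<tau> \<in> {Suc n..n + j}"
  show "hm (Suc n + j) (\<lambda>h. m \<tau> (take \<tau> h) (snd (h ! \<tau>)))"
    by (rule hm_compY[where G="\<lambda>y h. m \<tau> (take \<tau> h) y"]) (use \<tau> in \<open>auto intro!: hm_take Dist_hm[OF m]\<close>)
qed

lemma relM_split:
  assumes "Suc (Suc n) \<le> length h"
  shows "relM m n (Suc j) h = relM m n 1 (take (Suc (Suc n)) h) * relM m (Suc n) j h"
proof -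
  have "{Suc n..n + Suc j} = insert (Suc n) {Suc (Suc n)..Suc n + j}" by auto
  then show ?thesis unfolding relM_def using assms by (simp add: min_def)
qed

lemma Ent_nn:
  assumes g: "\<And>y'. y' \<in> Y \<Longrightarrow> 0 \<le> g y'" and s: "(\<Sum>y'\<in>Y. g y' * P y y') = 1" and y: "y \<in> Y"
  shows "0 \<le> Ent Y P g y"
proof -
  have key: "u - 1 \<le> u * ln u" if "0 \<le> u" for u :: real
  proof (cases "u = 0")
    case True then show ?thesis by simp
  next
    case False
    then have u: "0 < u" using that by simp
    have "ln (1/u) \<le> 1/u - 1" by (rule ln_le_minus_one) (use u in simp)
    then have "- ln u \<le> 1/u - 1" using False by (simp add: ln_div u)
    then have "u * (- ln u) \<le> u * (1/u - 1)" using u by (intro mult_left_mono) auto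
    then show ?thesis using u by (simp add: algebra_simps)
  qed
  have "0 = (\<Sum>y'\<in>Y. (g y' - 1) * P y y')"
    using s Psum[OF y] by (simp add: left_diff_distrib sum_subtractf)
  also have "\<dots> \<le> (\<Sum>y'\<in>Y. g y' * ln (g y') * P y y')"
    by (intro sum_mono mult_right_mono key g Pnn y)
  finally show ?thesis by (simp add: Ent_def)
qed

lemma Ent_one[simp]: "Ent Y P (\<lambda>_. 1) y = 0"
  by (simp add: Ent_def)

lemma Ent_Dist_nn: "m \<in> Dist Y P MX \<Longrightarrow> h \<in> H (Suc k) \<Longrightarrow> 0 \<le> Ent Y P (m (Suc k) h) (snd (last h))"
  by (rule Ent_nn) (auto intro: Dist_nn Dist_sum H_last)

lemma Ent_hm:
  assumes m: "m \<in> Dist Y P MX"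
  shows "hm (Suc k) (\<lambda>h. Ent Y P (m (Suc k) h) (snd (last h)))"
  unfolding Ent_def
  by (rule hm_last[where G="\<lambda>y h. \<Sum>y'\<in>Y. m (Suc k) h y' * ln (m (Suc k) h y') * P y y'"])
     (intro hm_sum hm_mult hm_ln hm_const Dist_hm[OF m]; simp)

lemma mart:
  assumes m: "m \<in> Dist Y P MX" and h: "h \<in> H (Suc n)"
  shows "E j (\<lambda>r. ennreal (relM m n j r)) h = 1"
  using h
proof (induction j arbitrary: n h)
  case 0 then show ?case by (simp add: E_0)
next
  case (Suc j)
  have "E (Suc j) (\<lambda>r. ennreal (relM m n (Suc j) r)) h = Nx (\<lambda>r. ennreal (relM m n 1 r)) h"
    unfolding E_Suc
  proof (rule Nx_cong[OF Suc.prems])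
    fix x y assume xy: "x \<in> space MX" "y \<in> Y"
    let ?r = "h @ [(x, y)]"
    have r: "?r \<in> H (Suc (Suc n))" using H_snoc[OF Suc.prems xy] .
    have "E j (\<lambda>r. ennreal (relM m n (Suc j) r)) ?r
        = E j (\<lambda>r'. ennreal (relM m n 1 (take (Suc (Suc n)) r')) * ennreal (relM m (Suc n) j r')) ?r"
    proof (rule E_cong[OF r])
      fix h' assume h': "h' \<in> H (Suc (Suc n) + j)" "take (Suc (Suc n)) h' = ?r"
      have l: "Suc (Suc n) \<le> length h'" using h' by (simp add: H_iff)
      have n1: "0 \<le> relM m n 1 (take (Suc (Suc n)) h')"
        using relM_nn[OF m, of "take (Suc (Suc n)) h'" n 1] H_take[OF h'(1), of "Suc (Suc n)"] by simp
      have n2: "0 \<le> relM m (Suc n) j h'" using relM_nn[OF m, of h' "Suc n" j] h' by simp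
      show "ennreal (relM m n (Suc j) h') = ennreal (relM m n 1 (take (Suc (Suc n)) h')) * ennreal (relM m (Suc n) j h')"
        using relM_split[OF l] n1 n2 by (simp add: ennreal_mult)
    qed
    also have "\<dots> = ennreal (relM m n 1 ?r) * E j (\<lambda>r'. ennreal (relM m (Suc n) j r')) ?r"
    proof (rule E_pull[OF r])
      show "take (Suc (Suc n)) ?r = ?r" using r by (simp add: H_iff)
      show "hm (Suc (Suc n) + j) (\<lambda>r'. ennreal (relM m (Suc n) j r'))"
        by (rule hm_ennreal) (rule relM_hm[OF m])
    qed simp_all
    also have "\<dots> = ennreal (relM m n 1 ?r)" using Suc.IH[OF r] by simp
    finally show "E j (\<lambda>r. ennreal (relM m n (Suc j) r)) ?r = ennreal (relM m n 1 ?r)" .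
  qed
  also have "\<dots> = 1"
  proof -
    have len: "length h = Suc n" using Suc.prems by (simp add: H_iff)
    have yl: "snd (last h) \<in> Y" using H_last[OF Suc.prems] .
    have "Nx (\<lambda>r. ennreal (relM m n 1 r)) h = (\<integral>\<^sup>+ x. (\<Sum>y'\<in>Y. ennreal (P (snd (last h)) y') * ennreal (m (Suc n) h y')) \<partial>MX)"
      unfolding Nx_def' relM_1 using len by (simp add: nth_append)
    also have "\<dots> = (\<integral>\<^sup>+ x. ennreal (\<Sum>y'\<in>Y. m (Suc n) h y' * P (snd (last h)) y') \<partial>MX)"
      using Dist_nn[OF m _ Suc.prems] Pnn[OF yl]
      by (intro nn_integral_cong) (simp add: sum_ennreal[symmetric] ennreal_mult mult.commute)
    also have "\<dots> = 1"
      using Dist_sum[OF m _ Suc.prems yl] prob_space.emeasure_space_1[OF MXp] by simp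
    finally show ?thesis .
  qed
  finally show ?case .
qed

definition V :: "real \<Rightarrow> (nat \<Rightarrow> ('x \<times> real) list \<Rightarrow> real \<Rightarrow> real) \<Rightarrow> (nat \<Rightarrow> ('x \<times> real) list \<Rightarrow> real) \<Rightarrow> nat \<Rightarrow> ('x \<times> real) list \<Rightarrow> ennreal" where
  "V g m e n r = (\<Sum>j. ennreal (g ^ j) * E j (\<lambda>h'. ennreal (relM m n j h' * e (n + j) h')) r)"

lemma f_hm:
  assumes m: "m \<in> Dist Y P MX" and e: "\<And>k. hm (Suc k) (e k)"
  shows "hm (Suc n + j) (\<lambda>h'. ennreal (relM m n j h' * e (n + j) h'))"
  by (intro hm_ennreal hm_mult relM_hm[OF m]) (use e[of "n + j"] in simp)

lemma E_step:
  assumes m: "m \<in> Dist Y P MX" and e: "\<And>k. hm (Suc k) (e k)" and enn: "\<And>k h. h \<in> H (Suc k) \<Longrightarrow> 0 \<le> e k h"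
    and r: "r \<in> H (Suc (Suc n))"
  shows "E j (\<lambda>h'. ennreal (relM m n (Suc j) h' * e (n + Suc j) h')) r
       = ennreal (relM m n 1 r) * E j (\<lambda>h'. ennreal (relM m (Suc n) j h' * e (Suc n + j) h')) r"
proof -
  have "E j (\<lambda>h'. ennreal (relM m n (Suc j) h' * e (n + Suc j) h')) r
      = E j (\<lambda>h'. ennreal (relM m n 1 (take (Suc (Suc n)) h')) * ennreal (relM m (Suc n) j h' * e (Suc n + j) h')) r"
  proof (rule E_cong[OF r])
    fix h' assume h': "h' \<in> H (Suc (Suc n) + j)" "take (Suc (Suc n)) h' = r"
    have l: "Suc (Suc n) \<le> length h'" using h' by (simp add: H_iff)
    have n1: "0 \<le> relM m n 1 (take (Suc (Suc n)) h')"
      using relM_nn[OF m, of "take (Suc (Suc n)) h'" n 1] H_take[OF h'(1), of "Suc (Suc n)"] by simp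
    have n2: "0 \<le> relM m (Suc n) j h'" using relM_nn[OF m, of h' "Suc n" j] h' by simp
    have n3: "0 \<le> e (Suc n + j) h'" using enn[of h' "Suc n + j"] h' by simp
    show "ennreal (relM m n (Suc j) h' * e (n + Suc j) h') = ennreal (relM m n 1 (take (Suc (Suc n)) h')) * ennreal (relM m (Suc n) j h' * e (Suc n + j) h')"
      using relM_split[OF l] n1 n2 n3 by (simp add: ennreal_mult mult.assoc)
  qed
  also have "\<dots> = ennreal (relM m n 1 r) * E j (\<lambda>h'. ennreal (relM m (Suc n) j h' * e (Suc n + j) h')) r"
  proof (rule E_pull[OF r])
    show "take (Suc (Suc n)) r = r" using r by (simp add: H_iff)
    show "hm (Suc (Suc n) + j) (\<lambda>h'. ennreal (relM m (Suc n) j h' * e (Suc n + j) h'))"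
      using f_hm[OF m e, of "Suc n" j] by simp
  qed simp_all
  finally show ?thesis .
qed

lemma Bellman:
  assumes m: "m \<in> Dist Y P MX" and e: "\<And>k. hm (Suc k) (e k)" and enn: "\<And>k h. h \<in> H (Suc k) \<Longrightarrow> 0 \<le> e k h"
    and g: "0 \<le> g" and r: "r \<in> H (Suc n)"
  shows "V g m e n r = ennreal (e n r) + ennreal g * Nx (\<lambda>r'. ennreal (relM m n 1 r') * V g m e (Suc n) r') r"
proof -
  define T where "T j = ennreal (g ^ j) * E j (\<lambda>h'. ennreal (relM m n j h' * e (n + j) h')) r" for j
  define G where "G j r' = ennreal (relM m n 1 r') * (ennreal (g ^ j) * E j (\<lambda>h'. ennreal (relM m (Suc n) j h' * e (Suc n + j) h')) r')" for j r'
  have V: "V g m e n r = (\<Sum>j. T (j + 1)) + T 0"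
    unfolding V_def T_def[symmetric] using suminf_offset[of T 1, OF summableI] by simp
  have T0: "T 0 = ennreal (e n r)" by (simp add: T_def E_0)
  have GM: "hm (Suc (Suc n)) (G j)" for j
    unfolding G_def
  proof (intro hm_mult_enn hm_ennreal)
    show "hm (Suc (Suc n)) (relM m n 1)" using relM_hm[OF m, of n 1] by simp
    show "hm (Suc (Suc n)) (\<lambda>r'. g ^ j)" by (rule hm_const)
    show "hm (Suc (Suc n)) (E j (\<lambda>h'. ennreal (relM m (Suc n) j h' * e (Suc n + j) h')))"
      by (rule hm_E) (use f_hm[OF m e, of "Suc n" j] in simp_all)
  qed
  have TS: "T (j + 1) = ennreal g * Nx (G j) r" for j
  proof -
    have st: "E (Suc j) (\<lambda>h'. ennreal (relM m n (Suc j) h' * e (n + Suc j) h')) r = Nx (\<lambda>r'. ennreal (relM m n 1 r') * E j (\<lambda>h'. ennreal (relM m (Suc n) j h' * e (Suc n + j) h')) r') r"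
      unfolding E_Suc
    proof (rule Nx_cong[OF r])
      fix x y assume xy: "x \<in> space MX" "y \<in> Y"
      show "E j (\<lambda>h'. ennreal (relM m n (Suc j) h' * e (n + Suc j) h')) (r @ [(x, y)]) =
         ennreal (relM m n 1 (r @ [(x, y)])) * E j (\<lambda>h'. ennreal (relM m (Suc n) j h' * e (Suc n + j) h')) (r @ [(x, y)])"
        by (rule E_step[OF m e enn H_snoc[OF r xy]])
    qed
    have "T (j + 1) = ennreal g * (ennreal (g ^ j) * Nx (\<lambda>r'. ennreal (relM m n 1 r') * E j (\<lambda>h'. ennreal (relM m (Suc n) j h' * e (Suc n + j) h')) r') r)"
      unfolding T_def Suc_eq_plus1[symmetric] st using g by (simp add: ennreal_mult power_Suc mult.assoc)
    also have "\<dots> = ennreal g * Nx (G j) r"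
    proof -
      have "Nx (G j) r = ennreal (g ^ j) * Nx (\<lambda>r'. ennreal (relM m n 1 r') * E j (\<lambda>h'. ennreal (relM m (Suc n) j h' * e (Suc n + j) h')) r') r"
        unfolding G_def mult.left_commute[of "ennreal (relM m n 1 _)"]
      proof (rule Nx_cmult[OF r])
        show "hm (Suc (Suc n)) (\<lambda>r'. ennreal (relM m n 1 r') * E j (\<lambda>h'. ennreal (relM m (Suc n) j h' * e (Suc n + j) h')) r')"
        proof (intro hm_mult_enn hm_ennreal)
          show "hm (Suc (Suc n)) (relM m n 1)" using relM_hm[OF m, of n 1] by simp
          show "hm (Suc (Suc n)) (E j (\<lambda>h'. ennreal (relM m (Suc n) j h' * e (Suc n + j) h')))"
            by (rule hm_E) (use f_hm[OF m e, of "Suc n" j] in simp_all)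
        qed
      qed
      then show ?thesis by simp
    qed
    finally show ?thesis .
  qed
  have "(\<Sum>j. T (j + 1)) = ennreal g * (\<Sum>j. Nx (G j) r)"
    unfolding TS by (rule ennreal_suminf_cmult)
  also have "(\<Sum>j. Nx (G j) r) = Nx (\<lambda>r'. \<Sum>j. G j r') r"
    by (rule Nx_suminf[OF r GM, symmetric])
  also have "\<dots> = Nx (\<lambda>r'. ennreal (relM m n 1 r') * V g m e (Suc n) r') r"
    unfolding G_def V_def by (simp only: ennreal_suminf_cmult)
  finally show ?thesis using V T0 by (simp add: add.commute)
qed

lemma V_le_ext:
  assumes r: "r \<in> H (Suc n)"
    and le: "\<And>j h'. h' \<in> H (Suc n + j) \<Longrightarrow> take (Suc n) h' = r \<Longrightarrow> relM m1 n j h' * e1 (n + j) h' \<le> relM m2 n j h' * e2 (n + j) h'"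
  shows "V g m1 e1 n r \<le> V g m2 e2 n r"
  unfolding V_def
proof (rule suminf_le[OF _ summableI summableI])
  fix j
  show "ennreal (g ^ j) * E j (\<lambda>h'. ennreal (relM m1 n j h' * e1 (n + j) h')) r
      \<le> ennreal (g ^ j) * E j (\<lambda>h'. ennreal (relM m2 n j h' * e2 (n + j) h')) r"
    by (rule mult_left_mono[OF E_mono[OF r] zero_le]) (rule ennreal_leI, rule le)
qed

lemma V_zero_ext:
  assumes r: "r \<in> H (Suc n)"
    and z: "\<And>j h'. h' \<in> H (Suc n + j) \<Longrightarrow> take (Suc n) h' = r \<Longrightarrow> relM m n j h' * e (n + j) h' \<le> 0"
  shows "V g m e n r = 0"
proof -
  have "E j (\<lambda>h'. ennreal (relM m n j h' * e (n + j) h')) r = E j (\<lambda>_. 0) r" for j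
    by (rule E_cong[OF r]) (use z in \<open>auto simp: ennreal_eq_0_iff\<close>)
  then show ?thesis unfolding V_def using E_const[OF r] by simp
qed

lemma V_cmult_e:
  assumes m: "m \<in> Dist Y P MX" and e: "\<And>k. hm (Suc k) (e k)" and enn: "\<And>k h. h \<in> H (Suc k) \<Longrightarrow> 0 \<le> e k h"
    and a: "0 \<le> a" and r: "r \<in> H (Suc n)"
  shows "V g m (\<lambda>k h. a * e k h) n r = ennreal a * V g m e n r"
proof -
  have "E j (\<lambda>h'. ennreal (relM m n j h' * (a * e (n + j) h'))) r = ennreal a * E j (\<lambda>h'. ennreal (relM m n j h' * e (n + j) h')) r" for j
  proof -
    have "E j (\<lambda>h'. ennreal (relM m n j h' * (a * e (n + j) h'))) r = E j (\<lambda>h'. ennreal a * ennreal (relM m n j h' * e (n + j) h')) r"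
    proof (rule E_cong[OF r])
      fix h' assume h': "h' \<in> H (Suc n + j)" "take (Suc n) h' = r"
      have "0 \<le> relM m n j h' * e (n + j) h'"
        using relM_nn[OF m h'(1)] enn[of h' "n + j"] h'(1) by simp
      then show "ennreal (relM m n j h' * (a * e (n + j) h')) = ennreal a * ennreal (relM m n j h' * e (n + j) h')"
        using a by (simp add: ennreal_mult[symmetric] mult.left_commute)
    qed
    also have "\<dots> = ennreal a * E j (\<lambda>h'. ennreal (relM m n j h' * e (n + j) h')) r"
      by (rule E_cmult[OF r]) (use f_hm[OF m e, of n j] in simp_all)
    finally show ?thesis .
  qed
  then show ?thesis unfolding V_def by (simp add: mult.left_commute)
qed

lemma geom_enn:
  assumes "0 \<le> g" "g < 1" "0 \<le> B"
  shows "(\<Sum>j. ennreal (g ^ j) * ennreal B) = ennreal (B / (1 - g))"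
proof -
  have "(\<lambda>j. g ^ j * B) sums (B / (1 - g))"
    using sums_mult2[OF geometric_sums[of g], of B] assms by (simp add: field_simps)
  then have "(\<Sum>j. ennreal (g ^ j * B)) = ennreal (B / (1 - g))"
    using assms by (subst suminf_ennreal2) (auto simp: sums_iff)
  then show ?thesis using assms by (simp add: ennreal_mult)
qed

lemma V_bound:
  assumes m: "m \<in> Dist Y P MX" and B: "0 \<le> B" and g: "0 \<le> g" "g < 1" and r: "r \<in> H (Suc n)"
    and eB: "\<And>k h. h \<in> H (Suc k) \<Longrightarrow> e k h \<le> B"
  shows "V g m e n r \<le> ennreal (B / (1 - g))"
proof -
  have "V g m e n r \<le> V g m (\<lambda>k h. B * 1) n r"
  proof (rule V_le_ext[OF r])
    fix j h' assume h': "h' \<in> H (Suc n + j)" "take (Suc n) h' = r"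
    show "relM m n j h' * e (n + j) h' \<le> relM m n j h' * (B * 1)"
      using mult_left_mono[OF eB[of h' "n + j"] relM_nn[OF m h'(1)]] h'(1) by simp
  qed
  also have "\<dots> = ennreal B * V g m (\<lambda>k h. 1) n r"
    by (rule V_cmult_e[OF m _ _ B r]) (simp_all add: hm_const)
  also have "V g m (\<lambda>k h. 1) n r = (\<Sum>j. ennreal (g ^ j))"
    unfolding V_def mult_1_right mart[OF m r] by (simp only: mult_1_right)
  also have "ennreal B * (\<Sum>j. ennreal (g ^ j)) = (\<Sum>j. ennreal B * ennreal (g ^ j))"
    by (rule ennreal_suminf_cmult[symmetric])
  also have "\<dots> = (\<Sum>j. ennreal (g ^ j) * ennreal B)"
    by (simp only: mult.commute)
  also have "\<dots> = ennreal (B / (1 - g))" by (rule geom_enn[OF g B])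
  finally show ?thesis .
qed

lemma DS_V:
  assumes m: "m \<in> Dist Y P MX" and r: "r \<in> H (Suc n)" and g: "0 \<le> g"
  shows "DS Y P MX g (\<lambda>j h'. relM m n j h' * Ent Y P (m (Suc (n + j)) h') (snd (last h'))) r
       = enn2ereal (V g m (\<lambda>k h. Ent Y P (m (Suc k) h) (snd (last h))) n r)"
proof -
  have t: "ereal (g ^ j) * cE Y P MX j (\<lambda>h'. relM m n j h' * Ent Y P (m (Suc (n + j)) h') (snd (last h'))) r
     = enn2ereal (ennreal (g ^ j) * E j (\<lambda>h'. ennreal (relM m n j h' * Ent Y P (m (Suc (n + j)) h') (snd (last h')))) r)" for j
  proof -
    have z: "E j (\<lambda>h'. ennreal (- (relM m n j h' * Ent Y P (m (Suc (n + j)) h') (snd (last h'))))) r = E j (\<lambda>_. 0) r"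
    proof (rule E_cong[OF r])
      fix h' assume h': "h' \<in> H (Suc n + j)" "take (Suc n) h' = r"
      have "0 \<le> relM m n j h' * Ent Y P (m (Suc (n + j)) h') (snd (last h'))"
        using relM_nn[OF m h'(1)] Ent_Dist_nn[OF m, of h' "n + j"] h'(1) by simp
      then show "ennreal (- (relM m n j h' * Ent Y P (m (Suc (n + j)) h') (snd (last h')))) = 0"
        by (simp add: ennreal_eq_0_iff)
    qed
    show ?thesis
      unfolding cE_def z E_const[OF r] using g by (simp add: times_ennreal.rep_eq zero_ennreal.rep_eq)
  qed
  show ?thesis unfolding DS_def t V_def suminf_enn2ereal by simp
qed

lemma ereal_aux1: "(a::ereal) + ereal c = g + b \<Longrightarrow> 0 \<le> b \<Longrightarrow> b \<le> ereal c \<Longrightarrow> a - b = g - ereal c"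
  by (cases a; cases b; cases g) auto

lemma ereal_aux2: "0 \<le> (X::ereal) \<Longrightarrow> 0 \<le> x \<Longrightarrow> (X - ereal p) + (x - ereal q) = (X + x) - ereal (p + q)"
  by (cases X; cases x) auto

lemma ereal_aux3: "0 \<le> (q::real) \<Longrightarrow> ereal q * (x - ereal c) = ereal q * x - ereal (q * c)"
  by (cases x) (auto simp: algebra_simps)

lemma sums_minus_ereal:
  fixes a :: "nat \<Rightarrow> ennreal" and b :: "nat \<Rightarrow> real"
  assumes b: "b sums B"
  shows "(\<lambda>j. enn2ereal (a j) - ereal (b j)) sums (enn2ereal (suminf a) - ereal B)"
proof -
  have ps: "(\<Sum>i<k. enn2ereal (a i) - ereal (b i)) = enn2ereal (\<Sum>i<k. a i) - ereal (\<Sum>i<k. b i)" for k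
  proof (induction k)
    case 0 then show ?case by (simp add: zero_ennreal.rep_eq)
  next
    case (Suc k)
    then show ?case by (simp add: ereal_aux2 plus_ennreal.rep_eq)
  qed
  have A: "(\<lambda>k. enn2ereal (\<Sum>i<k. a i)) \<longlonglongrightarrow> enn2ereal (suminf a)"
    using summable_sums[OF summableI, of a] unfolding sums_def
    by (intro tendsto_intros) auto
  have Bt: "(\<lambda>k. ereal (\<Sum>i<k. b i)) \<longlonglongrightarrow> ereal B"
    using b unfolding sums_def by (intro tendsto_intros)
  show ?thesis unfolding sums_def ps
    by (rule tendsto_diff_ereal_general[OF A Bt]) simp
qed

lemma hm_uminus: "hm n f \<Longrightarrow> hm n (\<lambda>h. - (f h :: real))"
  unfolding hm_def by (rule borel_measurable_uminus)

lemma SPMA_V: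
  assumes m: "m \<in> Dist Y P MX" and r: "r \<in> H (Suc n)"
    and g: "0 \<le> g" "g < 1" and th: "0 \<le> th" and C: "0 \<le> C"
    and cm: "\<And>k. hm (Suc k) (c k)" and cb: "\<And>k h. h \<in> H (Suc k) \<Longrightarrow> \<bar>c k h\<bar> \<le> C"
  shows "SPMA Y P MX g th c n m r
      = enn2ereal (V g m (\<lambda>k h. c k h + C + th * g * Ent Y P (m (Suc k) h) (snd (last h))) n r) - ereal (C / (1 - g))"
proof -
  define eW where "eW k h = c k h + C + th * g * Ent Y P (m (Suc k) h) (snd (last h))" for k h
  define F where "F j h' = relM m n j h' * (c (n + j) h' + th * g * Ent Y P (m (Suc (n + j)) h') (snd (last h')))" for j h'
  have tm: "ereal (g ^ j) * cE Y P MX j (F j) r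
     = enn2ereal (ennreal (g ^ j) * E j (\<lambda>h'. ennreal (relM m n j h' * eW (n + j) h')) r) - ereal (g ^ j * C)" for j
  proof -
    have FM: "hm (Suc n + j) (F j)"
      unfolding F_def
      by (intro hm_mult hm_add relM_hm[OF m] hm_const)
         (use cm[of "n + j"] Ent_hm[OF m, of "n + j"] in simp_all)
    have GM: "hm (Suc n + j) (\<lambda>h'. relM m n j h' * eW (n + j) h')"
      unfolding eW_def
      by (intro hm_mult hm_add relM_hm[OF m] hm_const)
         (use cm[of "n + j"] Ent_hm[OF m, of "n + j"] in simp_all)
    have DM: "hm (Suc n + j) (\<lambda>h'. C * relM m n j h')"
      by (intro hm_mult hm_const relM_hm[OF m])
    have pw: "0 \<le> relM m n j h' * eW (n + j) h' \<and> relM m n j h' * eW (n + j) h' = F j h' + C * relM m n j h' \<and> 0 \<le> relM m n j h'"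
      if h': "h' \<in> H (Suc n + j)" for h'
    proof -
      have rn: "0 \<le> relM m n j h'" using relM_nn[OF m h'] .
      have "0 \<le> eW (n + j) h'"
        unfolding eW_def using cb[of h' "n + j"] h' Ent_Dist_nn[OF m, of h' "n + j"] th g
        by (simp add: abs_le_iff)
      then have "0 \<le> relM m n j h' * eW (n + j) h'" using rn by simp
      then show ?thesis using rn unfolding eW_def F_def by (simp add: algebra_simps)
    qed
    define A where "A = E j (\<lambda>h'. ennreal (F j h')) r"
    define B where "B = E j (\<lambda>h'. ennreal (- F j h')) r"
    define G where "G = E j (\<lambda>h'. ennreal (relM m n j h' * eW (n + j) h')) r"
    have D: "E j (\<lambda>h'. ennreal (C * relM m n j h')) r = ennreal C"
    proof -
      have "E j (\<lambda>h'. ennreal (C * relM m n j h')) r = E j (\<lambda>h'. ennreal C * ennreal (relM m n j h')) r"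
        by (rule E_cong[OF r]) (use pw C in \<open>simp add: ennreal_mult\<close>)
      also have "\<dots> = ennreal C * E j (\<lambda>h'. ennreal (relM m n j h')) r"
        by (rule E_cmult[OF r]) (use relM_hm[OF m, of n j] in \<open>simp_all add: hm_ennreal\<close>)
      finally show ?thesis using mart[OF m r] by simp
    qed
    have eq: "A + ennreal C = G + B"
    proof -
      have "E j (\<lambda>h'. ennreal (F j h') + ennreal (C * relM m n j h')) r = E j (\<lambda>h'. ennreal (relM m n j h' * eW (n + j) h') + ennreal (- F j h')) r"
      proof (rule E_cong[OF r])
        fix h' assume h': "h' \<in> H (Suc n + j)" "take (Suc n) h' = r"
        from pw[OF h'(1)] C
        show "ennreal (F j h') + ennreal (C * relM m n j h') = ennreal (relM m n j h' * eW (n + j) h') + ennreal (- F j h')"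
          by (cases "0 \<le> F j h'") (auto simp: ennreal_plus[symmetric] ennreal_neg simp del: ennreal_plus)
      qed
      moreover have "E j (\<lambda>h'. ennreal (F j h') + ennreal (C * relM m n j h')) r = A + ennreal C"
        unfolding A_def D[symmetric] by (rule E_add[OF r]) (use FM DM in \<open>simp_all add: hm_ennreal\<close>)
      moreover have "E j (\<lambda>h'. ennreal (relM m n j h' * eW (n + j) h') + ennreal (- F j h')) r = G + B"
        unfolding G_def B_def by (rule E_add[OF r]) (use GM FM in \<open>simp_all add: hm_ennreal hm_uminus\<close>)
      ultimately show ?thesis by simp
    qed
    have BC: "B \<le> ennreal C"
      unfolding B_def D[symmetric]
    proof (rule E_mono[OF r])
      fix h' assume h': "h' \<in> H (Suc n + j)" "take (Suc n) h' = r"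
      show "ennreal (- F j h') \<le> ennreal (C * relM m n j h')"
        using pw[OF h'(1)] by (intro ennreal_leI) linarith
    qed
    have "enn2ereal A + ereal C = enn2ereal G + enn2ereal B"
      using arg_cong[OF eq, of enn2ereal] C by (simp add: plus_ennreal.rep_eq)
    moreover have "enn2ereal B \<le> ereal C"
      using BC C by (metis enn2ereal_ennreal less_eq_ennreal.rep_eq)
    ultimately have "enn2ereal A - enn2ereal B = enn2ereal G - ereal C"
      by (intro ereal_aux1) auto
    then have "cE Y P MX j (F j) r = enn2ereal G - ereal C"
      unfolding cE_def A_def B_def by simp
    then show ?thesis unfolding G_def using g
      by (simp add: ereal_aux3 times_ennreal.rep_eq)
  qed
  have geo: "(\<lambda>j. g ^ j * C) sums (C / (1 - g))"
    using sums_mult2[OF geometric_sums[of g], of C] g by (simp add: field_simps)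
  have "SPMA Y P MX g th c n m r = (\<Sum>j. ereal (g ^ j) * cE Y P MX j (F j) r)"
    unfolding SPMA_def DS_def F_def by simp
  also have "\<dots> = enn2ereal (V g m eW n r) - ereal (C / (1 - g))"
    unfolding tm V_def
    by (rule sums_unique[symmetric], rule sums_minus_ereal[OF geo])
  finally show ?thesis unfolding eW_def .
qed

lemma one_Dist: "(\<lambda>_ _ _. 1) \<in> Dist Y P MX"
  by (auto simp: Dist_def inM_def Psum hist_measurable_hm hm_const)

lemma E_zero[simp]: "E j (\<lambda>_. 0) r = 0"
proof (induction j arbitrary: r)
  case 0 then show ?case by (simp add: E_0)
next
  case (Suc j) then show ?case by (simp add: E_Suc Nx_def')
qed

lemma ereal_minus_cancel_le: "(a::ereal) - ereal c \<le> b - ereal c \<Longrightarrow> a \<le> b"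
  by (cases a; cases b) auto

lemma V_trunc:
  "V g m (\<lambda>k x. if k < n + N then e k x else 0) n r = (\<Sum>j<N. ennreal (g ^ j) * E j (\<lambda>h'. ennreal (relM m n j h' * e (n + j) h')) r)"
proof -
  have "V g m (\<lambda>k x. if k < n + N then e k x else 0) n r = (\<Sum>j. if j < N then ennreal (g ^ j) * E j (\<lambda>h'. ennreal (relM m n j h' * e (n + j) h')) r else 0)"
    unfolding V_def by (intro suminf_cong) auto
  also have "\<dots> = (\<Sum>j<N. ennreal (g ^ j) * E j (\<lambda>h'. ennreal (relM m n j h' * e (n + j) h')) r)"
    by (subst suminf_finite[of "{..<N}"]) auto
  finally show ?thesis .
qed

lemma V_SUP_trunc:
  "V g m e n r = (SUP N. V g m (\<lambda>k x. if k < n + N then e k x else 0) n r)"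
  unfolding V_trunc unfolding V_def by (rule suminf_eq_SUP)

end

locale mainctx = ctx Y P MX for Y P and MX :: "'x measure" +
  fixes g th C :: real and c :: "nat \<Rightarrow> ('x \<times> real) list \<Rightarrow> real" and t :: nat and h :: "('x \<times> real) list"
    and ms :: "nat \<Rightarrow> ('x \<times> real) list \<Rightarrow> real \<Rightarrow> real"
  assumes g0: "0 < g" and g1: "g < 1" and th: "0 < th" and C: "0 \<le> C"
    and cm: "\<And>k. hm (Suc k) (c k)" and cb: "\<And>k x. x \<in> H (Suc k) \<Longrightarrow> \<bar>c k x\<bar> \<le> C"
    and ms: "ms \<in> Dist Y P MX" and h: "h \<in> H (Suc t)"
    and opt: "\<And>m'. m' \<in> Dist Y P MX \<Longrightarrow> SPMA Y P MX g th c t ms h \<le> SPMA Y P MX g th c t m' h"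
begin

definition "eW m k x = c k x + C + th * g * Ent Y P (m (Suc k) x) (snd (last x))"
definition "eE m k x = Ent Y P (m (Suc k) x) (snd (last x))"
definition "K = 2 * C / ((1 - g) * th * g)"
definition "VEs n r = V g ms (eE ms) n r"
definition "badp x = (\<exists>i. Suc t \<le> i \<and> i \<le> length x \<and> ennreal K < VEs (i - 1) (take i x))"
definition "mn \<tau> x y = (if \<tau> \<le> t \<or> badp x then 1 else ms \<tau> x y)"

lemma eW_hm: "m \<in> Dist Y P MX \<Longrightarrow> hm (Suc k) (eW m k)"
  unfolding eW_def[abs_def] by (intro hm_add hm_mult hm_const cm Ent_hm)

lemma eE_hm: "m \<in> Dist Y P MX \<Longrightarrow> hm (Suc k) (eE m k)"
  unfolding eE_def[abs_def] by (rule Ent_hm)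

lemma eE_nn: "m \<in> Dist Y P MX \<Longrightarrow> x \<in> H (Suc k) \<Longrightarrow> 0 \<le> eE m k x"
  unfolding eE_def by (rule Ent_Dist_nn)

lemma eW_ge: "m \<in> Dist Y P MX \<Longrightarrow> x \<in> H (Suc k) \<Longrightarrow> th * g * eE m k x \<le> eW m k x"
  unfolding eW_def eE_def using cb[of x k] by (simp add: abs_le_iff)

lemma eW_nn: "m \<in> Dist Y P MX \<Longrightarrow> x \<in> H (Suc k) \<Longrightarrow> 0 \<le> eW m k x"
  using eW_ge[of m x k] eE_nn[of m x k] th g0 by (smt (verit) mult_nonneg_nonneg)

lemma K_eq: "th * g * K = 2 * C / (1 - g)"
  unfolding K_def using th g0 g1 by (simp add: field_simps)

lemma K_nn: "0 \<le> K"
  unfolding K_def using th g0 g1 C by simp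

lemma VW_ge:
  assumes m: "m \<in> Dist Y P MX" and r: "r \<in> H (Suc n)"
  shows "ennreal (th * g) * V g m (eE m) n r \<le> V g m (eW m) n r"
proof -
  have "ennreal (th * g) * V g m (eE m) n r = V g m (\<lambda>k x. (th * g) * eE m k x) n r"
    by (rule V_cmult_e[OF m eE_hm[OF m] eE_nn[OF m] _ r, symmetric]) (use th g0 in \<open>auto intro!: mult_nonneg_nonneg\<close>)
  also have "\<dots> \<le> V g m (eW m) n r"
  proof (rule V_le_ext[OF r])
    fix j h' assume h': "h' \<in> H (Suc n + j)" "take (Suc n) h' = r"
    show "relM m n j h' * (th * g * eE m (n + j) h') \<le> relM m n j h' * eW m (n + j) h'"
      using eW_ge[OF m, of h' "n + j"] relM_nn[OF m h'(1)] h'(1) by (intro mult_left_mono) auto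
  qed
  finally show ?thesis .
qed

lemma SPMA_eq: "m \<in> Dist Y P MX \<Longrightarrow> r \<in> H (Suc n) \<Longrightarrow> SPMA Y P MX g th c n m r = enn2ereal (V g m (eW m) n r) - ereal (C / (1 - g))"
  unfolding eW_def[abs_def] by (rule SPMA_V) (use g0 g1 th C cm cb in auto)

lemma Vone: "V g (\<lambda>_ _ _. 1) (eW (\<lambda>_ _ _. 1)) t h \<le> ennreal (2 * C / (1 - g))"
  by (rule V_bound[OF one_Dist _ _ g1 h]) (use C g0 cb in \<open>auto simp: eW_def abs_le_iff\<close>)

lemma Vms_le: "V g ms (eW ms) t h \<le> ennreal (2 * C / (1 - g))"
proof -
  have "enn2ereal (V g ms (eW ms) t h) - ereal (C / (1 - g)) \<le> enn2ereal (V g (\<lambda>_ _ _. 1) (eW (\<lambda>_ _ _. 1)) t h) - ereal (C / (1 - g))"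
    using opt[OF one_Dist] SPMA_eq[OF ms h] SPMA_eq[OF one_Dist h] by simp
  then have "enn2ereal (V g ms (eW ms) t h) \<le> enn2ereal (V g (\<lambda>_ _ _. 1) (eW (\<lambda>_ _ _. 1)) t h)"
    by (rule ereal_minus_cancel_le)
  then have "V g ms (eW ms) t h \<le> V g (\<lambda>_ _ _. 1) (eW (\<lambda>_ _ _. 1)) t h"
    by (simp add: less_eq_ennreal.rep_eq)
  then show ?thesis using Vone by simp
qed

lemma ennreal_div_aux:
  assumes "0 < a" "ennreal a * x \<le> ennreal b" "0 \<le> b"
  shows "x \<le> ennreal (b / a)"
proof (cases x)
  case (real r)
  then have "a * r \<le> b" using assms by (simp add: ennreal_mult[symmetric] ennreal_le_iff)
  then show ?thesis using real assms by (simp add: field_simps ennreal_leI)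
next
  case top
  then show ?thesis using assms by (simp add: ennreal_mult_top top_unique)
qed

lemma VEs_h: "VEs t h \<le> ennreal K"
proof -
  have "ennreal (th * g) * VEs t h \<le> ennreal (2 * C / (1 - g))"
    unfolding VEs_def using VW_ge[OF ms h] Vms_le by simp
  from ennreal_div_aux[OF _ this] show ?thesis
    using th g0 g1 C unfolding K_def by (simp add: field_simps)
qed

lemma VEs_hm: "hm (Suc n) (VEs n)"
proof -
  have "hm (Suc n) (\<lambda>r. \<Sum>j. ennreal (g ^ j) * E j (\<lambda>h'. ennreal (relM ms n j h' * eE ms (n + j) h')) r)"
  proof (intro hm_suminf_enn hm_mult_enn hm_ennreal hm_const)
    fix j show "hm (Suc n) (E j (\<lambda>h'. ennreal (relM ms n j h' * eE ms (n + j) h')))"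
      by (rule hm_E) (use f_hm[OF ms eE_hm[OF ms], of n j] in simp_all)
  qed
  then show ?thesis unfolding VEs_def V_def[abs_def] .
qed

lemma badp_ext:
  assumes "badp x" "length x \<le> length x'" "take (length x) x' = x"
  shows "badp x'"
proof -
  obtain i where i: "Suc t \<le> i" "i \<le> length x" "ennreal K < VEs (i - 1) (take i x)"
    using assms(1) unfolding badp_def by blast
  have "take i x' = take i x" using assms(3) i(2) by (metis min.absorb1 take_take)
  then show ?thesis unfolding badp_def using i assms(2) by (intro exI[of _ i]) auto
qed

lemma badp_take:
  assumes "badp (take k x)"
  shows "badp x"
proof (cases "k \<le> length x")
  case True
  then show ?thesis using badp_ext[OF assms] by (simp add: min_def)
next
  case False
  then show ?thesis using assms by simp
qed

lemma mn_Dist: "mn \<in> Dist Y P MX"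
  unfolding Dist_def
proof (safe)
  fix k x assume x: "x \<in> H (Suc k)"
  show "inM Y P (mn (Suc k) x)"
  proof (cases "Suc k \<le> t \<or> badp x")
    case True
    then show ?thesis unfolding mn_def inM_def using Psum by simp
  next
    case False
    then show ?thesis unfolding mn_def using ms x by (simp add: Dist_def)
  qed
next
  fix k y assume y: "y \<in> Y"
  show "hist_measurable Y MX (Suc k) (\<lambda>x. mn (Suc k) x y)"
    unfolding hist_measurable_hm
  proof (cases "Suc k \<le> t")
    case True
    then show "hm (Suc k) (\<lambda>x. mn (Suc k) x y)" unfolding mn_def by (simp add: hm_const)
  next
    case False
    have fm: "(\<lambda>w. VEs (i - 1) (take i (map w [0..<Suc k]))) \<in> borel_measurable (PI (Suc k))" if "i \<in> {Suc t..Suc k}" for i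
    proof -
      have "hm i (VEs (i - 1))" using VEs_hm[of "i - 1"] that by (cases i) auto
      then have "hm (Suc k) (\<lambda>x. VEs (i - 1) (take i x))" by (rule hm_take[rotated]) (use that in simp)
      then show ?thesis unfolding hm_def .
    qed
    have sets: "{w \<in> space (PI (Suc k)). badp (map w [0..<Suc k])} \<in> sets (PI (Suc k))"
    proof -
      have "{w \<in> space (PI (Suc k)). badp (map w [0..<Suc k])} = (\<Union>i\<in>{Suc t..Suc k}. {w \<in> space (PI (Suc k)). ennreal K < VEs (i - 1) (take i (map w [0..<Suc k]))})"
        unfolding badp_def by auto
      also have "\<dots> \<in> sets (PI (Suc k))"
      proof (rule sets.finite_UN)
        fix i assume "i \<in> {Suc t..Suc k}"
        from fm[OF this] show "{w \<in> space (PI (Suc k)). ennreal K < VEs (i - 1) (take i (map w [0..<Suc k]))} \<in> sets (PI (Suc k))"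
          by measurable
      qed simp
      finally show ?thesis .
    qed
    have "(\<lambda>w. if badp (map w [0..<Suc k]) then 1 else ms (Suc k) (map w [0..<Suc k]) y) \<in> borel_measurable (PI (Suc k))"
      by (rule measurable_If[OF _ _ sets]) (use Dist_hm[OF ms _ y, of "Suc k"] in \<open>simp_all add: hm_def\<close>)
    then show "hm (Suc k) (\<lambda>x. mn (Suc k) x y)" unfolding mn_def hm_def using False by simp
  qed
qed

lemma bad_child:
  assumes x: "x \<in> H (Suc n)" and nb: "\<not> badp x" and b: "badp (x @ [z])"
  shows "ennreal K < VEs (Suc n) (x @ [z])"
proof -
  have len: "length x = Suc n" using x by (simp add: H_iff)
  obtain i where i: "Suc t \<le> i" "i \<le> length (x @ [z])" "ennreal K < VEs (i - 1) (take i (x @ [z]))"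
    using b unfolding badp_def by blast
  show ?thesis
  proof (cases "i \<le> Suc n")
    case True
    then have "take i (x @ [z]) = take i x" using len by simp
    then have "badp x" unfolding badp_def using i True len by (intro exI[of _ i]) auto
    then show ?thesis using nb by simp
  next
    case False
    then have "i = Suc (Suc n)" using i(2) len by simp
    then show ?thesis using i(3) len by simp
  qed
qed

lemma mn_eq: "t < k \<Longrightarrow> \<not> badp x \<Longrightarrow> mn k x = ms k x"
  unfolding mn_def by auto

lemma mn_bad: "badp x \<Longrightarrow> mn k x = (\<lambda>_. 1)"
  unfolding mn_def by auto

lemma trunc_hm: "hm (Suc k) (\<lambda>z. if k < L then eW mn k z else 0)"
  using eW_hm[OF mn_Dist, of k] by (cases "k < L") (simp_all add: hm_const)

lemma C2:
  assumes "t \<le> n" "x \<in> H (Suc n)" "\<not> badp x"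
  shows "V g mn (\<lambda>k z. if k < n + N then eW mn k z else 0) n x \<le> V g ms (eW ms) n x"
  using assms
proof (induction N arbitrary: n x)
  case 0
  have "V g mn (\<lambda>k z. if k < n + 0 then eW mn k z else 0) n x = 0"
    by (rule V_zero_ext[OF "0.prems"(2)]) simp
  then show ?case by simp
next
  case (Suc N)
  note x = Suc.prems(2)
  have L: "n + Suc N = Suc n + N" by simp
  have bl: "V g mn (\<lambda>k z. if k < n + Suc N then eW mn k z else 0) n x
      = ennreal (eW mn n x) + ennreal g * Nx (\<lambda>r'. ennreal (relM mn n 1 r') * V g mn (\<lambda>k z. if k < Suc n + N then eW mn k z else 0) (Suc n) r') x"
    unfolding L
    by (subst Bellman[OF mn_Dist trunc_hm _ less_imp_le[OF g0] x]) (use eW_nn[OF mn_Dist] in auto)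
  have br: "V g ms (eW ms) n x = ennreal (eW ms n x) + ennreal g * Nx (\<lambda>r'. ennreal (relM ms n 1 r') * V g ms (eW ms) (Suc n) r') x"
    by (rule Bellman[OF ms eW_hm[OF ms] eW_nn[OF ms] less_imp_le[OF g0] x])
  have mnx: "mn (Suc n) x = ms (Suc n) x" using mn_eq Suc.prems by simp
  have e0: "eW mn n x = eW ms n x" unfolding eW_def mnx ..
  have "Nx (\<lambda>r'. ennreal (relM mn n 1 r') * V g mn (\<lambda>k z. if k < Suc n + N then eW mn k z else 0) (Suc n) r') x
      \<le> Nx (\<lambda>r'. ennreal (relM ms n 1 r') * V g ms (eW ms) (Suc n) r') x"
  proof (rule Nx_mono[OF x])
    fix a y assume ay: "a \<in> space MX" "y \<in> Y"
    let ?r = "x @ [(a, y)]"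
    have r: "?r \<in> H (Suc (Suc n))" using H_snoc[OF x ay] .
    have len: "length x = Suc n" using x by (simp add: H_iff)
    have rel: "relM mn n 1 ?r = relM ms n 1 ?r" unfolding relM_1 using len mnx by (simp add: nth_append)
    have "V g mn (\<lambda>k z. if k < Suc n + N then eW mn k z else 0) (Suc n) ?r \<le> V g ms (eW ms) (Suc n) ?r"
    proof (cases "badp ?r")
      case False
      then show ?thesis using Suc.IH[of "Suc n" ?r] r Suc.prems(1) by simp
    next
      case True
      have "V g mn (\<lambda>k z. if k < Suc n + N then eW mn k z else 0) (Suc n) ?r \<le> V g mn (\<lambda>k z. 2 * C) (Suc n) ?r"
      proof (rule V_le_ext[OF r])
        fix j h' assume h': "h' \<in> H (Suc (Suc n) + j)" "take (Suc (Suc n)) h' = ?r"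
        have "badp h'" by (rule badp_ext[OF True]) (use h' len in \<open>auto simp: H_iff\<close>)
        then have "eW mn (Suc n + j) h' = c (Suc n + j) h' + C" by (simp add: eW_def mn_bad)
        then have "(if Suc n + j < Suc n + N then eW mn (Suc n + j) h' else 0) \<le> 2 * C"
          using cb[of h' "Suc n + j"] h'(1) C by (auto simp: abs_le_iff)
        then show "relM mn (Suc n) j h' * (if Suc n + j < Suc n + N then eW mn (Suc n + j) h' else 0) \<le> relM mn (Suc n) j h' * (2 * C)"
          using relM_nn[OF mn_Dist h'(1)] by (intro mult_left_mono) auto
      qed
      also have "\<dots> \<le> ennreal (2 * C / (1 - g))"
        by (rule V_bound[OF mn_Dist _ _ g1 r]) (use C g0 in auto)
      also have "\<dots> = ennreal (th * g) * ennreal K"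
        using K_eq th g0 K_nn by (simp add: ennreal_mult'[symmetric])
      also have "\<dots> \<le> ennreal (th * g) * VEs (Suc n) ?r"
        using bad_child[OF x Suc.prems(3) True] by (intro mult_left_mono) auto
      also have "\<dots> \<le> V g ms (eW ms) (Suc n) ?r" unfolding VEs_def by (rule VW_ge[OF ms r])
      finally show ?thesis .
    qed
    then show "ennreal (relM mn n 1 ?r) * V g mn (\<lambda>k z. if k < Suc n + N then eW mn k z else 0) (Suc n) ?r
        \<le> ennreal (relM ms n 1 ?r) * V g ms (eW ms) (Suc n) ?r"
      unfolding rel by (rule mult_left_mono) simp
  qed
  then show ?case unfolding bl br e0 by (intro add_left_mono mult_left_mono) auto
qed

lemma not_badp_h: "\<not> badp h"
proof
  assume "badp h"
  then obtain i where i: "Suc t \<le> i" "i \<le> length h" "ennreal K < VEs (i - 1) (take i h)"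
    unfolding badp_def by blast
  have "length h = Suc t" using h by (simp add: H_iff)
  then have "i = Suc t" "take i h = h" using i by auto
  then show False using i(3) VEs_h by simp
qed

lemma SPMA_mn_le: "SPMA Y P MX g th c t mn h \<le> SPMA Y P MX g th c t ms h"
proof -
  have "V g mn (eW mn) t h \<le> V g ms (eW ms) t h"
    unfolding V_SUP_trunc[of g mn "eW mn" t h]
    by (rule SUP_least) (rule C2[OF order.refl h not_badp_h])
  then have "enn2ereal (V g mn (eW mn) t h) \<le> enn2ereal (V g ms (eW ms) t h)"
    by (simp add: less_eq_ennreal.rep_eq)
  then show ?thesis unfolding SPMA_eq[OF mn_Dist h] SPMA_eq[OF ms h]
    by (rule ereal_minus_mono) simp
qed

lemma not_badp_VEs:
  assumes "t \<le> n" "x \<in> H (Suc n)" "\<not> badp x"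
  shows "VEs n x \<le> ennreal K"
proof -
  have "length x = Suc n" using assms(2) by (simp add: H_iff)
  then show ?thesis using assms(1,3) unfolding badp_def
    by (metis diff_Suc_1 not_le_imp_less not_less_eq_eq order.refl take_all)
qed

lemma C3a:
  assumes "t \<le> n" "x \<in> H (Suc n)"
  shows "V g mn (eE mn) n x \<le> ennreal K"
proof (cases "badp x")
  case True
  have "V g mn (eE mn) n x = 0"
  proof (rule V_zero_ext[OF assms(2)])
    fix j h' assume h': "h' \<in> H (Suc n + j)" "take (Suc n) h' = x"
    have "badp h'" by (rule badp_ext[OF True]) (use h' assms(2) in \<open>auto simp: H_iff\<close>)
    then show "relM mn n j h' * eE mn (n + j) h' \<le> 0" by (simp add: eE_def mn_bad)
  qed
  then show ?thesis by simp
next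
  case False
  have "V g mn (eE mn) n x \<le> V g ms (eE ms) n x"
  proof (rule V_le_ext[OF assms(2)])
    fix j h' assume h': "h' \<in> H (Suc n + j)" "take (Suc n) h' = x"
    have rhs: "0 \<le> relM ms n j h' * eE ms (n + j) h'"
      using relM_nn[OF ms h'(1)] eE_nn[OF ms, of h' "n + j"] h'(1) by simp
    show "relM mn n j h' * eE mn (n + j) h' \<le> relM ms n j h' * eE ms (n + j) h'"
    proof (cases "badp h'")
      case True
      then show ?thesis using rhs by (simp add: eE_def mn_bad)
    next
      case nb: False
      have "relM mn n j h' = relM ms n j h'"
        unfolding relM_def
      proof (rule prod.cong[OF refl])
        fix \<tau> assume \<tau>: "\<tau> \<in> {Suc n..n + j}"
        have "\<not> badp (take \<tau> h')" using nb badp_take by blast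
        then show "mn \<tau> (take \<tau> h') (snd (h' ! \<tau>)) = ms \<tau> (take \<tau> h') (snd (h' ! \<tau>))"
          using mn_eq[of \<tau> "take \<tau> h'"] \<tau> assms(1) by simp
      qed
      moreover have "eE mn (n + j) h' = eE ms (n + j) h'"
        unfolding eE_def using mn_eq[of "Suc (n + j)" h'] nb assms(1) by simp
      ultimately show ?thesis by simp
    qed
  qed
  also have "\<dots> \<le> ennreal K" using not_badp_VEs[OF assms(1,2) False] unfolding VEs_def .
  finally show ?thesis .
qed

lemma C3b:
  assumes "n < t" "x \<in> H (Suc n)" "\<And>z. z \<in> H (Suc (Suc n)) \<Longrightarrow> V g mn (eE mn) (Suc n) z \<le> ennreal K"
  shows "V g mn (eE mn) n x \<le> ennreal K"
proof -
  have len: "length x = Suc n" using assms(2) by (simp add: H_iff)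
  have b: "V g mn (eE mn) n x = ennreal (eE mn n x) + ennreal g * Nx (\<lambda>r'. ennreal (relM mn n 1 r') * V g mn (eE mn) (Suc n) r') x"
    by (rule Bellman[OF mn_Dist eE_hm[OF mn_Dist] eE_nn[OF mn_Dist] less_imp_le[OF g0] assms(2)])
  have e0: "eE mn n x = 0" unfolding eE_def mn_def using assms(1) by simp
  have nx: "Nx (\<lambda>r'. ennreal (relM mn n 1 r') * V g mn (eE mn) (Suc n) r') x \<le> Nx (\<lambda>_. ennreal K) x"
  proof (rule Nx_mono[OF assms(2)])
    fix a y assume ay: "a \<in> space MX" "y \<in> Y"
    have "relM mn n 1 (x @ [(a, y)]) = 1" unfolding relM_1 mn_def using assms(1) len by (simp add: nth_append)
    then show "ennreal (relM mn n 1 (x @ [(a, y)])) * V g mn (eE mn) (Suc n) (x @ [(a, y)]) \<le> ennreal K"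
      using assms(3)[OF H_snoc[OF assms(2) ay]] by simp
  qed
  have nk: "Nx (\<lambda>_. ennreal K) x = ennreal K" by (rule Nx_const[OF assms(2)])
  have "V g mn (eE mn) n x \<le> ennreal g * ennreal K"
    unfolding b e0 using nx nk by (simp add: mult_left_mono)
  also have "ennreal g * ennreal K = ennreal (g * K)" using g0 K_nn by (simp add: ennreal_mult')
  also have "\<dots> \<le> ennreal K"
    using g1 K_nn by (intro ennreal_leI) (simp add: mult_left_le_one_le less_imp_le g0)
  finally show ?thesis .
qed

lemma C3: "x \<in> H (Suc n) \<Longrightarrow> V g mn (eE mn) n x \<le> ennreal K"
proof -
  have "\<forall>x\<in>H (Suc (t - k)). V g mn (eE mn) (t - k) x \<le> ennreal K" for k
  proof (induction k)
    case 0 then show ?case using C3a by simp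
  next
    case (Suc k)
    show ?case
    proof (cases "Suc k \<le> t")
      case True
      then have e: "Suc (t - Suc k) = t - k" by simp
      show ?thesis
      proof
        fix x assume "x \<in> H (Suc (t - Suc k))"
        show "V g mn (eE mn) (t - Suc k) x \<le> ennreal K"
        proof (rule C3b)
          show "t - Suc k < t" using True by simp
          show "x \<in> H (Suc (t - Suc k))" by fact
          fix z assume "z \<in> H (Suc (Suc (t - Suc k)))"
          then show "V g mn (eE mn) (Suc (t - Suc k)) z \<le> ennreal K" using Suc.IH e by simp
        qed
      qed
    next
      case False
      then have "t - Suc k = t - k" by simp
      then show ?thesis using Suc.IH by simp
    qed
  qed
  note all = this
  assume x: "x \<in> H (Suc n)"
  show ?thesis
  proof (cases "t \<le> n")
    case True then show ?thesis using C3a x by blast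
  next
    case False
    then have "t - (t - n) = n" by simp
    then show ?thesis using all[of "t - n"] x by simp
  qed
qed

lemma mn_MM: "mn \<in> MM Y P MX g (2 * C / ((1 - g) * th * g))"
  unfolding MM_def
proof (safe intro!: mn_Dist)
  fix n x assume x: "x \<in> H (Suc n)"
  have "DS Y P MX g (\<lambda>j h'. relM mn n j h' * Ent Y P (mn (Suc (n + j)) h') (snd (last h'))) x = enn2ereal (V g mn (eE mn) n x)"
    unfolding eE_def[abs_def] by (rule DS_V[OF mn_Dist x less_imp_le[OF g0]])
  also have "\<dots> \<le> ereal K"
    using C3[OF x] K_nn by (metis enn2ereal_ennreal less_eq_ennreal.rep_eq)
  finally show "DS Y P MX g (\<lambda>j h'. relM mn n j h' * Ent Y P (mn (Suc (n + j)) h') (snd (last h'))) x \<le> ereal (2 * C / ((1 - g) * th * g))"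
    unfolding K_def .
qed

end

theorem lemmaS1:
  fixes Y :: "real set" and P :: "real \<Rightarrow> real \<Rightarrow> real" and MX :: "'x measure"
    and \<gamma> \<theta> C :: real and c :: "nat \<Rightarrow> ('x \<times> real) list \<Rightarrow> real"
  assumes Y: "finite Y" "Y \<noteq> {}" "\<forall>y\<in>Y. 0 \<le> y"
    and P: "\<forall>y\<in>Y. \<forall>y'\<in>Y. 0 \<le> P y y'" "\<forall>y\<in>Y. (\<Sum>y'\<in>Y. P y y') = 1"
    and MX: "prob_space MX"
    and \<gamma>: "0 < \<gamma>" "\<gamma> < 1"
    and \<theta>: "0 < \<theta>"
    and feasible: "\<forall>t. hist_measurable Y MX (Suc t) (c t)"
    and bounded: "\<forall>t. \<forall>h\<in>hist Y MX (Suc t). \<bar>c t h\<bar> \<le> C"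
    and attained: "\<forall>t. \<forall>h\<in>hist Y MX (Suc t). \<exists>m\<in>Dist Y P MX.
        \<forall>m'\<in>Dist Y P MX. SPMA Y P MX \<gamma> \<theta> c t m h \<le> SPMA Y P MX \<gamma> \<theta> c t m' h"
  shows "\<forall>t. \<forall>h\<in>hist Y MX (Suc t).
      (INF m\<in>MM Y P MX \<gamma> (2 * C / ((1 - \<gamma>) * \<theta> * \<gamma>)). SPMA Y P MX \<gamma> \<theta> c t m h)
        = (INF m\<in>Dist Y P MX. SPMA Y P MX \<gamma> \<theta> c t m h)
    \<and> (\<exists>m\<in>MM Y P MX \<gamma> (2 * C / ((1 - \<gamma>) * \<theta> * \<gamma>)).
        \<forall>m'\<in>Dist Y P MX. SPMA Y P MX \<gamma> \<theta> c t m h \<le> SPMA Y P MX \<gamma> \<theta> c t m' h)"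
proof (intro allI ballI)
  fix t h assume h: "h \<in> hist Y MX (Suc t)"
  interpret ctx Y P MX
    by (rule ctx.intro) (use Y P MX in auto)
  obtain ms where ms: "ms \<in> Dist Y P MX" and opt: "\<And>m'. m' \<in> Dist Y P MX \<Longrightarrow> SPMA Y P MX \<gamma> \<theta> c t ms h \<le> SPMA Y P MX \<gamma> \<theta> c t m' h"
    using attained h by blast
  have C0: "0 \<le> C" using bounded h by (meson abs_ge_zero order.trans)
  interpret M: mainctx Y P MX \<gamma> \<theta> C c t h ms
  proof
    show "0 < \<gamma>" "\<gamma> < 1" "0 < \<theta>" "0 \<le> C" by (fact \<gamma>(1) \<gamma>(2) \<theta> C0)+
    show "\<And>k. hm (Suc k) (c k)" using feasible hist_measurable_hm by blast
    show "\<And>k x. x \<in> hist Y MX (Suc k) \<Longrightarrow> \<bar>c k x\<bar> \<le> C" using bounded by blast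
  qed (use ms h opt in auto)
  have mnMM: "M.mn \<in> MM Y P MX \<gamma> (2 * C / ((1 - \<gamma>) * \<theta> * \<gamma>))" by (rule M.mn_MM)
  have best: "\<forall>m'\<in>Dist Y P MX. SPMA Y P MX \<gamma> \<theta> c t M.mn h \<le> SPMA Y P MX \<gamma> \<theta> c t m' h"
    using M.SPMA_mn_le opt order.trans by blast
  have sub: "MM Y P MX \<gamma> (2 * C / ((1 - \<gamma>) * \<theta> * \<gamma>)) \<subseteq> Dist Y P MX" unfolding MM_def by auto
  show "(INF m\<in>MM Y P MX \<gamma> (2 * C / ((1 - \<gamma>) * \<theta> * \<gamma>)). SPMA Y P MX \<gamma> \<theta> c t m h)
        = (INF m\<in>Dist Y P MX. SPMA Y P MX \<gamma> \<theta> c t m h)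
    \<and> (\<exists>m\<in>MM Y P MX \<gamma> (2 * C / ((1 - \<gamma>) * \<theta> * \<gamma>)).
        \<forall>m'\<in>Dist Y P MX. SPMA Y P MX \<gamma> \<theta> c t m h \<le> SPMA Y P MX \<gamma> \<theta> c t m' h)"
  proof (intro conjI antisym)
    show "\<exists>m\<in>MM Y P MX \<gamma> (2 * C / ((1 - \<gamma>) * \<theta> * \<gamma>)).
        \<forall>m'\<in>Dist Y P MX. SPMA Y P MX \<gamma> \<theta> c t m h \<le> SPMA Y P MX \<gamma> \<theta> c t m' h"
      using best mnMM by blast
    show "(INF m\<in>MM Y P MX \<gamma> (2 * C / ((1 - \<gamma>) * \<theta> * \<gamma>)). SPMA Y P MX \<gamma> \<theta> c t m h) \<le> (INF m\<in>Dist Y P MX. SPMA Y P MX \<gamma> \<theta> c t m h)"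
      by (rule order.trans[OF INF_lower[OF mnMM]]) (use best in \<open>auto intro: INF_greatest\<close>)
    show "(INF m\<in>Dist Y P MX. SPMA Y P MX \<gamma> \<theta> c t m h) \<le> (INF m\<in>MM Y P MX \<gamma> (2 * C / ((1 - \<gamma>) * \<theta> * \<gamma>)). SPMA Y P MX \<gamma> \<theta> c t m h)"
      by (rule INF_superset_mono[OF sub order.refl])
  qed
qed

end
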